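(* Assume $Q$ is a given probability measure and there exists $V \in \mathcal{C}=\bigcap_{i=1}^t \mathcal{C}_i$ such that $I(V|Q) < \infty$. Then for every $n\ge 1$ and $1\le i\le t$ the I-projection $P_{n,i}$ of $S_{n,i}$ onto $\mathcal{C}_i$ exists, $I(P_{n,i}|S_{n,i})<\infty$, and hence the densities $dP_{n,i}/dS_{n,i}$ defined by the algorithm exist for all $n, i$.
   Context: Let $(\Omega,\mathcal{F})$ be a measurable space and $Q$ a probability measure (PM) on it. For measures $P,Q$, the I-divergence is $I(P|Q)=\int \ln(dP/dQ)\,dP$ if $P\ll Q$ and $+\infty$ otherwise (with conventions $\ln 0=-\infty$, $\ln(a/0)=+\infty$, $0\cdot(\pm\infty)=0$); for a finite measure $Q$ with total mass $c$, $I(P|Q)=I(P|Q/c)-\ln c$. The I-projection of a (finite) measure $S$ onto a set $\mathcal{D}$ of PMs is the $R\in\mathcal{D}$ with $I(R|S)=\inf_{P\in\mathcal{D}} I(P|S)<\infty$; it exists uniquely when $\mathcal{D}$ is variation-closed and convex and some $P\in\mathcal{D}$ has $I(P|S)<\infty$. Let $\mathcal{C}_1,\dots,\mathcal{C}_t$ be variation-closed, convex sets of PMs and $\mathcal{C}=\bigcap_{i=1}^t\mathcal{C}_i$. The (primal) iterative algorithm: set $S_{0,i}=P_{0,i}=Q$ for all $i$; for $n\ge1$ and $i=1,\dots,t$ define $dS_{n,1}/dQ = (dP_{n-1,t}/dQ)\,(dP_{n-1,1}/dS_{n-1,1})^{-1}$ and $dS_{n,i}/dQ = (dP_{n,i-1}/dQ)\,(dP_{n-1,i}/dS_{n-1,i})^{-1}$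 for $i=2,\dots,t$, and let $P_{n,i}$ be the I-projection of $S_{n,i}$ onto $\mathcal{C}_i$; the index $i$ cycles through $1,\dots,t$ and then $n$ increases. The measures $S_{n,i}$ need not be PMs, and the following is assumed (Assumption A): $\sup_{n,i}\int dS_{n,i}=M_1<\infty$. *)

theory Defs
  imports "HOL-Probability.Probability"
begin

definition PMs :: "'a measure \<Rightarrow> 'a measure set" where
  "PMs Q = {P. prob_space P \<and> sets P = sets Q}"

text \<open>Total variation distance (sup form; differs from the variation norm by a factor 2).\<close>
definition tv_dist :: "'a measure \<Rightarrow> 'a measure \<Rightarrow> 'a measure \<Rightarrow> real" where
  "tv_dist Q P R = (SUP A\<in>sets Q. \<bar>measure P A - measure R A\<bar>)"

definition variation_closed :: "'a measure \<Rightarrow> 'a measure set \<Rightarrow> bool" where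
  "variation_closed Q D \<longleftrightarrow>
     (\<forall>Pk R. (\<forall>k. Pk k \<in> D) \<longrightarrow> R \<in> PMs Q \<longrightarrow>
        (\<lambda>k. tv_dist Q (Pk k) R) \<longlonglongrightarrow> 0 \<longrightarrow> R \<in> D)"

definition mix :: "'a measure \<Rightarrow> real \<Rightarrow> 'a measure \<Rightarrow> 'a measure \<Rightarrow> 'a measure" where
  "mix Q a P R = measure_of (space Q) (sets Q)
      (\<lambda>A. ennreal a * emeasure P A + ennreal (1 - a) * emeasure R A)"

definition convex_PMs :: "'a measure \<Rightarrow> 'a measure set \<Rightarrow> bool" where
  "convex_PMs Q D \<longleftrightarrow> (\<forall>P\<in>D. \<forall>R\<in>D. \<forall>a\<in>{0..1}. mix Q a P R \<in> D)"

text \<open>I-divergence I(P|R) = int ln(dP/dR) dP if P << R, +infinity otherwise.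
  The integral is split into positive and negative parts of the log-density.\<close>
definition Idiv :: "'a measure \<Rightarrow> 'a measure \<Rightarrow> ereal" where
  "Idiv P R = (if sets P = sets R \<and> absolutely_continuous R P then
      enn2ereal (\<integral>\<^sup>+x. ennreal (max 0 (ln (enn2real (RN_deriv R P x)))) \<partial>P)
      - enn2ereal (\<integral>\<^sup>+x. ennreal (max 0 (- ln (enn2real (RN_deriv R P x)))) \<partial>P)
    else \<infinity>)"

definition is_Iproj :: "'a measure \<Rightarrow> 'a measure set \<Rightarrow> 'a measure \<Rightarrow> bool" where
  "is_Iproj S D R \<longleftrightarrow> R \<in> D \<and> Idiv R S = (INF P\<in>D. Idiv P S) \<and> Idiv R S < \<infinity>"

definition Iproj :: "'a measure \<Rightarrow> 'a measure set \<Rightarrow> 'a measure" where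
  "Iproj S D = (SOME R. is_Iproj S D R)"

text \<open>The iterative algorithm: Ialg Q C t n i = (S_{n,i}, P_{n,i}) for n \<ge> 0, 1 \<le> i \<le> t.\<close>
fun Ialg :: "'a measure \<Rightarrow> (nat \<Rightarrow> 'a measure set) \<Rightarrow> nat \<Rightarrow> nat \<Rightarrow> nat \<Rightarrow> 'a measure \<times> 'a measure" where
  "Ialg Q C t 0 i = (Q, Q)"
| "Ialg Q C t (Suc m) 0 = (Q, Q)"
| "Ialg Q C t (Suc m) (Suc 0) =
     (let S = density Q (\<lambda>x. RN_deriv Q (snd (Ialg Q C t m t)) x *
                inverse (RN_deriv (fst (Ialg Q C t m 1)) (snd (Ialg Q C t m 1)) x))
      in (S, Iproj S (C 1)))"
| "Ialg Q C t (Suc m) (Suc (Suc j)) =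
     (let S = density Q (\<lambda>x. RN_deriv Q (snd (Ialg Q C t (Suc m) (Suc j))) x *
                inverse (RN_deriv (fst (Ialg Q C t m (Suc (Suc j)))) (snd (Ialg Q C t m (Suc (Suc j)))) x))
      in (S, Iproj S (C (Suc (Suc j)))))"

definition algS :: "'a measure \<Rightarrow> (nat \<Rightarrow> 'a measure set) \<Rightarrow> nat \<Rightarrow> nat \<Rightarrow> nat \<Rightarrow> 'a measure" where
  "algS Q C t n i = fst (Ialg Q C t n i)"

definition algP :: "'a measure \<Rightarrow> (nat \<Rightarrow> 'a measure set) \<Rightarrow> nat \<Rightarrow> nat \<Rightarrow> nat \<Rightarrow> 'a measure" where
  "algP Q C t n i = snd (Ialg Q C t n i)"

end

theory Submission
  imports Defs "HOL-Real_Asymp.Real_Asymp"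
begin

definition xlx :: "real \<Rightarrow> real" where "xlx x = x * ln x"

lemma ln_ge_1_minus_inv: "0 < (x::real) \<Longrightarrow> 1 - 1/x \<le> ln x"
  using ln_le_minus_one[of "1/x"] by (simp add: ln_div)

lemma xlx_0[simp]: "xlx 0 = 0" by (simp add: xlx_def)

lemma xlx_lower: "0 \<le> x \<Longrightarrow> x - 1 \<le> xlx x"
proof (cases "x = 0")
  case False
  assume "0 \<le> x" with False have x: "0 < x" by simp
  have "x * (1 - 1/x) \<le> x * ln x" using ln_ge_1_minus_inv[OF x] x by (intro mult_left_mono) auto
  moreover have "x * (1 - 1/x) = x - 1" using x by (simp add: field_simps)
  ultimately show ?thesis by (simp add: xlx_def)
qed simp

lemma xlx_ge_m1: "0 \<le> x \<Longrightarrow> -1 \<le> xlx x"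
  using xlx_lower[of x] by simp

lemma bregman_nonneg:
  assumes x: "0 < x" and y: "0 \<le> y"
  shows "xlx x + (ln x + 1) * (y - x) \<le> xlx y"
proof (cases "y = 0")
  case True then show ?thesis using x by (simp add: xlx_def algebra_simps)
next
  case False
  with y have y: "0 < y" by simp
  have "1 - x/y \<le> ln (y/x)" using ln_ge_1_minus_inv[of "y/x"] x y by simp
  then have "y * (1 - x/y) \<le> y * ln (y/x)" using y by (intro mult_left_mono) auto
  moreover have "y * (1 - x/y) = y - x" using y by (simp add: field_simps)
  moreover have "ln (y/x) = ln y - ln x" using x y by (simp add: ln_div)
  ultimately have "y - x \<le> y * (ln y - ln x)" by simp
  then show ?thesis by (simp add: xlx_def algebra_simps)
qed

lemma xlx_convex:
  assumes r: "0 \<le> r" and v: "0 \<le> v" and a: "0 \<le> a" "a \<le> 1"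
  shows "xlx ((1-a)*r + a* v) \<le> (1-a)*xlx r + a*xlx v"
proof (cases "(1-a)*r + a* v = 0")
  case True
  then have "(1-a)*r = 0" "a* v = 0" using r v a by (smt (verit) mult_nonneg_nonneg)+
  then have "(1-a)*xlx r = 0" "a*xlx v = 0" by (auto simp: xlx_def)
  then have "(1-a)*xlx r + a*xlx v = 0" by (simp only: add_0)
  then show ?thesis using True by simp
next
  case False
  define m where "m = (1-a)*r + a* v"
  have m: "0 < m" using False r v a m_def by (smt (verit) mult_nonneg_nonneg)
  have 1: "xlx m + (ln m + 1) * (r - m) \<le> xlx r" by (rule bregman_nonneg[OF m r])
  have 2: "xlx m + (ln m + 1) * (v - m) \<le> xlx v" by (rule bregman_nonneg[OF m v])
  have "(1-a)*(xlx m + (ln m + 1) * (r - m)) + a*(xlx m + (ln m + 1) * (v - m)) \<le> (1-a)*xlx r + a*xlx v"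
    using 1 2 a by (intro add_mono mult_left_mono) auto
  moreover have "(1-a)*(xlx m + (ln m + 1) * (r - m)) + a*(xlx m + (ln m + 1) * (v - m)) = xlx m"
    by (simp add: m_def algebra_simps)
  ultimately show ?thesis by (simp add: m_def)
qed

lemma chi_ineq:
  assumes g: "0 \<le> g" "g \<le> 2"
  shows "(g-1)^2/4 \<le> xlx g - g + 1"
proof -
  define chi where "chi g = xlx g - g + 1 - (g-1)^2/4" for g :: real
  have D: "DERIV chi x :> ln x - (x-1)/2" if "0 < x" for x
    unfolding chi_def xlx_def using that
    by (auto intro!: derivative_eq_intros simp: power2_eq_square field_simps)
  have c1: "chi 1 = 0" by (simp add: chi_def xlx_def)
  have "0 \<le> chi g"
  proof (cases "g = 0")
    case True then show ?thesis by (simp add: chi_def)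
  next
    case False
    with g have gp: "0 < g" by simp
    show ?thesis
    proof (cases "g \<le> 1")
      case True
      have "chi 1 \<le> chi g"
      proof (rule DERIV_nonpos_imp_nonincreasing[OF True])
        fix x assume x: "g \<le> x" "x \<le> 1"
        then have xp: "0 < x" using gp by simp
        have "ln x \<le> x - 1" by (rule ln_le_minus_one[OF xp])
        then have "ln x - (x-1)/2 \<le> 0" using x by simp
        then show "\<exists>y. DERIV chi x :> y \<and> y \<le> 0" using D[OF xp] by blast
      qed
      then show ?thesis using c1 by simp
    next
      case False
      then have g1: "1 \<le> g" by simp
      have "chi 1 \<le> chi g"
      proof (rule DERIV_nonneg_imp_nondecreasing[OF g1])
        fix x assume x: "1 \<le> x" "x \<le> g"
        then have xp: "0 < x" by simp
        have "1 - 1/x \<le> ln x" by (rule ln_ge_1_minus_inv[OF xp])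
        moreover have "(x-1)/2 \<le> 1 - 1/x"
        proof -
          have eq: "1 - 1/x - (x-1)/2 = (x-1)*(2-x)/(2*x)" using xp by (simp add: field_simps)
          have "0 \<le> (x-1)*(2-x)/(2*x)" using x g xp by (intro divide_nonneg_nonneg mult_nonneg_nonneg) auto
          with eq show ?thesis by linarith
        qed
        ultimately have "0 \<le> ln x - (x-1)/2" by simp
        then show "\<exists>y. DERIV chi x :> y \<and> 0 \<le> y" using D[OF xp] by blast
      qed
      then show ?thesis using c1 by simp
    qed
  qed
  then show ?thesis by (simp add: chi_def)
qed

lemma xlx_mid_aux:
  fixes a m :: real
  assumes a: "0 \<le> a" "a \<le> 2*m" and m: "0 < m"
  shows "(a-m)^2/(4*m) \<le> a * ln a - a * ln m - a + m"
proof -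
  have "((a/m)-1)^2/4 \<le> xlx (a/m) - a/m + 1" using a m by (intro chi_ineq) (auto simp: field_simps)
  then have "m * (((a/m)-1)^2/4) \<le> m * (xlx (a/m) - a/m + 1)" using m by (intro mult_left_mono) auto
  moreover have "m * (((a/m)-1)^2/4) = (a-m)^2/(4*m)" using m by (simp add: field_simps power2_eq_square)
  moreover have "m * (xlx (a/m) - a/m + 1) = a * ln a - a * ln m - a + m"
    using m a by (cases "a = 0") (auto simp: xlx_def ln_div field_simps)
  ultimately show ?thesis by simp
qed

lemma xlx_mid:
  assumes a: "0 \<le> a" and b: "0 \<le> b" and e: "0 < e"
  shows "\<bar>a-b\<bar> \<le> e*((a+b)/2) + (2/e)*(xlx a + xlx b - 2*xlx((a+b)/2))"
proof (cases "a + b = 0")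
  case True then have "a = 0" "b = 0" using a b by auto
  then show ?thesis by simp
next
  case False
  define m where "m = (a+b)/2"
  have m: "0 < m" using a b False m_def by simp
  have A: "(a-m)^2/(4*m) \<le> a * ln a - a * ln m - a + m" using a b m by (intro xlx_mid_aux) (auto simp: m_def)
  have B: "(b-m)^2/(4*m) \<le> b * ln b - b * ln m - b + m" using a b m by (intro xlx_mid_aux) (auto simp: m_def)
  have eq: "xlx a + xlx b - 2*xlx m = (a * ln a - a * ln m - a + m) + (b * ln b - b * ln m - b + m)"
    by (simp add: xlx_def m_def algebra_simps)
  have am: "a - m = (a-b)/2" and bm: "b - m = -((a-b)/2)" by (simp_all add: m_def field_simps)
  have eq2: "(a-m)^2/(4*m) + (b-m)^2/(4*m) = (a-b)^2/(8*m)"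
    unfolding am bm using m by (simp add: field_simps power2_eq_square)
  have C: "(a-b)^2/(8*m) \<le> xlx a + xlx b - 2*xlx m" using A B eq eq2 by linarith
  have amgm: "\<bar>a-b\<bar> \<le> e*m + (a-b)^2/(4*e*m)"
  proof -
    have "0 \<le> (\<bar>a-b\<bar> - 2*e*m)^2" by simp
    then have "4*e*m*\<bar>a-b\<bar> \<le> (a-b)^2 + 4*e^2*m^2" by (simp add: power2_eq_square algebra_simps)
    then have "\<bar>a-b\<bar> \<le> ((a-b)^2 + 4*e^2*m^2)/(4*e*m)" using e m by (simp add: field_simps)
    also have "\<dots> = e*m + (a-b)^2/(4*e*m)" using e m by (simp add: field_simps power2_eq_square)
    finally show ?thesis .
  qed
  have "(a-b)^2/(4*e*m) = (2/e) * ((a-b)^2/(8*m))" using e m by (simp add: field_simps)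
  also have "\<dots> \<le> (2/e) * (xlx a + xlx b - 2*xlx m)" using C e by (intro mult_left_mono) auto
  finally show ?thesis using amgm by (simp add: m_def)
qed

lemma isCont_phi: "isCont xlx x"
proof (cases "x = 0")
  case True
  have "((\<lambda>x. x * ln x) \<longlongrightarrow> 0) (at_right (0::real))" by real_asymp
  moreover have "((\<lambda>x. x * ln x) \<longlongrightarrow> 0) (at_left (0::real))"
  proof -
    have "((\<lambda>x. - x * ln x) \<longlongrightarrow> 0) (at_right (0::real))" by real_asymp
    then have "((\<lambda>x. (- x) * ln (- x)) \<longlongrightarrow> 0) (at_right (- 0::real))" by (simp add: ln_minus)
    then show ?thesis by (simp add: filterlim_at_left_to_right[where a=0])
  qed
  ultimately have "((\<lambda>x. x * ln x) \<longlongrightarrow> 0) (at (0::real))"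
    by (simp add: filterlim_split_at)
  then show ?thesis using True by (simp add: isCont_def xlx_def[abs_def])
next
  case False
  then show ?thesis unfolding xlx_def[abs_def] by (intro continuous_intros) auto
qed

lemma borel_measurable_xlx[measurable (raw)]:
  assumes [measurable]: "f \<in> borel_measurable M"
  shows "(\<lambda>x. xlx (f x)) \<in> borel_measurable M"
  unfolding xlx_def by measurable

lemma ennreal_mult_max: "0 \<le> (a::real) \<Longrightarrow> ennreal a * ennreal (max 0 b) = ennreal (a*b)"
proof (cases "0 \<le> b")
  case True
  assume "0 \<le> a" then show ?thesis using True by (simp add: ennreal_mult)
next
  case False
  assume a: "0 \<le> a"
  then have "a * b \<le> 0" using False by (simp add: mult_nonneg_nonpos)
  then show ?thesis using False by (simp add: ennreal_neg)
qed

lemma ennreal_mult_left_nn: "0 \<le> (a::real) \<Longrightarrow> ennreal a * ennreal b = ennreal (a*b)"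
  using ennreal_mult_max[of a b] by (simp add: ennreal_max_0)

lemma ennreal_abs_split: "ennreal \<bar>y\<bar> = ennreal y + ennreal (- y)"
  by (cases "0 \<le> y") (auto simp: ennreal_neg)

lemma enn2ereal_fin: "x < \<infinity> \<Longrightarrow> enn2ereal x = ereal (enn2real x)"
  by (cases x rule: ennreal_cases) auto

lemma Idiv_density:
  fixes X :: "'a measure" and w :: "'a \<Rightarrow> real"
  assumes X: "finite_measure X" and w[measurable]: "w \<in> borel_measurable X"
    and nn: "\<And>x. x \<in> space X \<Longrightarrow> 0 \<le> w x"
  shows "Idiv (density X (\<lambda>x. ennreal (w x))) X =
    (if integrable X (\<lambda>x. xlx (w x)) then ereal (\<integral>x. xlx (w x) \<partial>X) else \<infinity>)"
proof -
  interpret finite_measure X by fact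
  let ?P = "density X (\<lambda>x. ennreal (w x))"
  have ac: "absolutely_continuous X ?P" by (rule absolutely_continuousI_density) simp
  have sets: "sets ?P = sets X" by simp
  have ae: "AE x in X. ennreal (w x) = RN_deriv X ?P x" by (rule RN_deriv_unique) auto
  have ae2: "AE x in X. enn2real (RN_deriv X ?P x) = w x"
    using ae AE_space by eventually_elim (metis enn2real_ennreal nn)
  define Ip where "Ip = (\<integral>\<^sup>+x. ennreal (xlx (w x)) \<partial>X)"
  define In where "In = (\<integral>\<^sup>+x. ennreal (- xlx (w x)) \<partial>X)"
  have eqp: "(\<integral>\<^sup>+x. ennreal (max 0 (ln (enn2real (RN_deriv X ?P x)))) \<partial>?P) = Ip"
  proof -
    have "(\<integral>\<^sup>+x. ennreal (max 0 (ln (enn2real (RN_deriv X ?P x)))) \<partial>?P)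
        = (\<integral>\<^sup>+x. ennreal (w x) * ennreal (max 0 (ln (enn2real (RN_deriv X ?P x)))) \<partial>X)"
      by (rule nn_integral_density) auto
    also have "\<dots> = Ip" unfolding Ip_def
      apply (rule nn_integral_cong_AE) using ae2 AE_space apply eventually_elim
      by (simp add: xlx_def ennreal_mult_left_nn nn)
    finally show ?thesis .
  qed
  have eqn: "(\<integral>\<^sup>+x. ennreal (max 0 (- ln (enn2real (RN_deriv X ?P x)))) \<partial>?P) = In"
  proof -
    have "(\<integral>\<^sup>+x. ennreal (max 0 (- ln (enn2real (RN_deriv X ?P x)))) \<partial>?P)
        = (\<integral>\<^sup>+x. ennreal (w x) * ennreal (max 0 (- ln (enn2real (RN_deriv X ?P x)))) \<partial>X)"
      by (rule nn_integral_density) auto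
    also have "\<dots> = In" unfolding In_def
      apply (rule nn_integral_cong_AE) using ae2 AE_space apply eventually_elim
      by (simp add: xlx_def ennreal_mult_left_nn nn)
    finally show ?thesis .
  qed
  have In_fin: "In < \<infinity>"
  proof -
    have "In \<le> (\<integral>\<^sup>+x. 1 \<partial>X)" unfolding In_def
      using xlx_ge_m1[OF nn] by (intro nn_integral_mono) (auto simp: ennreal_le_1)
    also have "\<dots> < \<infinity>" by (simp add: less_top[symmetric])
    finally show ?thesis .
  qed
  have int_iff: "integrable X (\<lambda>x. xlx (w x)) \<longleftrightarrow> Ip < \<infinity>"
  proof -
    have "(\<integral>\<^sup>+x. ennreal (norm (xlx (w x))) \<partial>X) = Ip + In"
      unfolding Ip_def In_def real_norm_def ennreal_abs_split
      by (rule nn_integral_add) auto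
    then show ?thesis using In_fin by (simp add: integrable_iff_bounded xlx_def)
  qed
  have Idiv_eq: "Idiv ?P X = enn2ereal Ip - enn2ereal In"
    unfolding Idiv_def using ac sets eqp eqn by simp
  show ?thesis
  proof (cases "integrable X (\<lambda>x. xlx (w x))")
    case True
    then have Ip: "Ip < \<infinity>" using int_iff by simp
    have "(\<integral>x. xlx (w x) \<partial>X) = enn2real Ip - enn2real In"
      unfolding Ip_def In_def by (rule real_lebesgue_integral_def[OF True])
    moreover have "enn2ereal Ip = ereal (enn2real Ip)" "enn2ereal In = ereal (enn2real In)"
      using Ip In_fin by (simp_all add: enn2ereal_fin)
    ultimately show ?thesis using True Idiv_eq by simp
  next
    case False
    then have "Ip = \<infinity>" using int_iff by (simp add: less_top[symmetric])
    moreover have "enn2ereal In = ereal (enn2real In)" using In_fin by (simp add: enn2ereal_fin)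
    ultimately show ?thesis using False Idiv_eq by simp
  qed
qed


lemma Idiv_density_fin_iff:
  fixes X :: "'a measure" and w :: "'a \<Rightarrow> real"
  assumes X: "finite_measure X" and w[measurable]: "w \<in> borel_measurable X"
    and nn: "\<And>x. x \<in> space X \<Longrightarrow> 0 \<le> w x"
  shows "Idiv (density X (\<lambda>x. ennreal (w x))) X < \<infinity> \<longleftrightarrow> integrable X (\<lambda>x. xlx (w x))"
  using Idiv_density[OF assms] by simp

lemma xlx_integrable_iff_ln:
  fixes X :: "'a measure" and w :: "'a \<Rightarrow> real"
  assumes w[measurable]: "w \<in> borel_measurable X"
    and nn: "\<And>x. x \<in> space X \<Longrightarrow> 0 \<le> w x"
  shows "integrable X (\<lambda>x. xlx (w x)) \<longleftrightarrow> integrable (density X (\<lambda>x. ennreal (w x))) (\<lambda>x. ln (w x))"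
  by (subst integrable_density) (auto simp: xlx_def nn)

lemma density_prob_int:
  fixes X :: "'a measure" and w :: "'a \<Rightarrow> real"
  assumes w[measurable]: "w \<in> borel_measurable X"
    and nn: "\<And>x. x \<in> space X \<Longrightarrow> 0 \<le> w x"
    and P: "prob_space (density X (\<lambda>x. ennreal (w x)))"
  shows "integrable X w" "(\<integral>x. w x \<partial>X) = 1"
proof -
  have "emeasure (density X (\<lambda>x. ennreal (w x))) (space X) = 1"
    using prob_space.emeasure_space_1[OF P] by simp
  moreover have "emeasure (density X (\<lambda>x. ennreal (w x))) (space X) = (\<integral>\<^sup>+x. ennreal (w x) \<partial>X)"
    by (subst emeasure_density) (auto intro!: nn_integral_cong)
  ultimately have "(\<integral>\<^sup>+x. ennreal (w x) \<partial>X) = ennreal 1" by simp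
  then have "integrable X w \<and> (\<integral>x. w x \<partial>X) = 1"
    by (subst (asm) nn_integral_eq_integrable) (auto simp: nn)
  then show "integrable X w" "(\<integral>x. w x \<partial>X) = 1" by auto
qed

lemma Idiv_finite_rep:
  assumes X: "finite_measure X" and V: "prob_space V" and fin: "Idiv V X < \<infinity>"
  shows "sets V = sets X" "absolutely_continuous X V"
    "V = density X (\<lambda>x. ennreal (enn2real (RN_deriv X V x)))"
proof -
  interpret finite_measure X by fact
  interpret V: prob_space V by fact
  show sV: "sets V = sets X" and ac: "absolutely_continuous X V"
    using fin unfolding Idiv_def by (auto split: if_splits)
  have "V = density X (RN_deriv X V)" using density_RN_deriv[OF ac sV] by simp
  also have "\<dots> = density X (\<lambda>x. ennreal (enn2real (RN_deriv X V x)))"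
  proof (rule density_cong)
    show "AE x in X. RN_deriv X V x = ennreal (enn2real (RN_deriv X V x))"
      using RN_deriv_finite[OF _ ac sV] V.sigma_finite_measure_axioms
      by (auto elim!: AE_mp simp: less_top[symmetric])
  qed auto
  finally show "V = density X (\<lambda>x. ennreal (enn2real (RN_deriv X V x)))" .
qed

lemma Idiv_lower:
  assumes X: "finite_measure X" and V: "prob_space V"
  shows "- ereal (measure X (space X)) \<le> Idiv V X"
proof (cases "Idiv V X < \<infinity>")
  case False then show ?thesis by (simp add: top.not_eq_extremum)
next
  case True
  interpret finite_measure X by fact
  define w where "w x = enn2real (RN_deriv X V x)" for x
  have wm[measurable]: "w \<in> borel_measurable X" unfolding w_def by measurable
  have nn: "\<And>x. 0 \<le> w x" unfolding w_def by simp
  have Vd: "V = density X (\<lambda>x. ennreal (w x))" using Idiv_finite_rep(3)[OF X V True] by (simp add: w_def)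
  have I: "Idiv V X = (if integrable X (\<lambda>x. xlx (w x)) then ereal (\<integral>x. xlx (w x) \<partial>X) else \<infinity>)"
    unfolding Vd by (rule Idiv_density[OF X wm nn])
  show ?thesis
  proof (cases "integrable X (\<lambda>x. xlx (w x))")
    case int: True
    have "(\<integral>x. -1 \<partial>X) \<le> (\<integral>x. xlx (w x) \<partial>X)"
      by (rule integral_mono) (auto simp: int xlx_ge_m1 nn)
    then show ?thesis using I int by simp
  qed (use I in simp)
qed


lemma mix_density:
  fixes X Q :: "'a measure" and f g :: "'a \<Rightarrow> real"
  assumes sX: "sets X = sets Q"
    and f[measurable]: "f \<in> borel_measurable X" and g[measurable]: "g \<in> borel_measurable X"
    and fn: "\<And>x. x \<in> space X \<Longrightarrow> 0 \<le> f x" and gn: "\<And>x. x \<in> space X \<Longrightarrow> 0 \<le> g x"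
    and a: "0 \<le> a" "a \<le> 1"
  shows "mix Q a (density X (\<lambda>x. ennreal (f x))) (density X (\<lambda>x. ennreal (g x)))
       = density X (\<lambda>x. ennreal (a * f x + (1-a) * g x))"
proof -
  let ?h = "density X (\<lambda>x. ennreal (a * f x + (1-a) * g x))"
  have spX: "space X = space Q" using sets_eq_imp_space_eq[OF sX] .
  have "mix Q a (density X (\<lambda>x. ennreal (f x))) (density X (\<lambda>x. ennreal (g x)))
      = measure_of (space Q) (sets Q) (emeasure ?h)"
    unfolding mix_def
  proof (rule measure_of_eq)
    show "sets Q \<subseteq> Pow (space Q)" by (rule sets.space_closed)
    fix A assume "A \<in> sigma_sets (space Q) (sets Q)"
    then have A: "A \<in> sets X" using sX sets.sigma_sets_eq[of Q] by simp
    have pw: "\<And>x. x \<in> space X \<Longrightarrow> ennreal (a * f x + (1-a) * g x) * indicator A x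
        = ennreal a * (ennreal (f x) * indicator A x) + ennreal (1-a) * (ennreal (g x) * indicator A x)"
      using a fn gn by (auto simp: ennreal_plus ennreal_mult' ennreal_mult split: split_indicator)
    have "emeasure ?h A = (\<integral>\<^sup>+x. ennreal (a * f x + (1-a) * g x) * indicator A x \<partial>X)"
      using A by (subst emeasure_density) auto
    also have "\<dots> = (\<integral>\<^sup>+x. ennreal a * (ennreal (f x) * indicator A x) + ennreal (1-a) * (ennreal (g x) * indicator A x) \<partial>X)"
      by (rule nn_integral_cong) (rule pw)
    also have "\<dots> = ennreal a * (\<integral>\<^sup>+x. ennreal (f x) * indicator A x \<partial>X) + ennreal (1-a) * (\<integral>\<^sup>+x. ennreal (g x) * indicator A x \<partial>X)"
      using A by (subst nn_integral_add) (auto simp: nn_integral_cmult)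
    also have "\<dots> = ennreal a * emeasure (density X (\<lambda>x. ennreal (f x))) A + ennreal (1-a) * emeasure (density X (\<lambda>x. ennreal (g x))) A"
      using A by (simp add: emeasure_density)
    finally show "ennreal a * emeasure (density X (\<lambda>x. ennreal (f x))) A + ennreal (1-a) * emeasure (density X (\<lambda>x. ennreal (g x))) A = emeasure ?h A"
      by simp
  qed
  also have "\<dots> = measure_of (space ?h) (sets ?h) (emeasure ?h)" using sX spX by simp
  also have "\<dots> = ?h" by (rule measure_of_of_measure)
  finally show ?thesis .
qed

lemma L1_complete_geo:
  fixes S :: "'a measure" and g :: "nat \<Rightarrow> 'a \<Rightarrow> real"
  assumes S: "finite_measure S"
    and g[measurable]: "\<And>j. g j \<in> borel_measurable S"
    and gn: "\<And>j x. x \<in> space S \<Longrightarrow> 0 \<le> g j x"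
    and gi: "\<And>j. integrable S (g j)"
    and cau: "\<And>j l. j \<le> l \<Longrightarrow> (\<integral>x. \<bar>g j x - g l x\<bar> \<partial>S) \<le> (1/2)^j"
  shows "\<exists>F. F \<in> borel_measurable S \<and> (\<forall>x\<in>space S. 0 \<le> F x) \<and> integrable S F \<and>
     (AE x in S. (\<lambda>j. g j x) \<longlonglongrightarrow> F x) \<and> (\<forall>j. (\<integral>x. \<bar>g j x - F x\<bar> \<partial>S) \<le> (1/2)^j)"
proof -
  interpret finite_measure S by fact
  define u where "u j x = ennreal \<bar>g (Suc j) x - g j x\<bar>" for j x
  have um[measurable]: "\<And>j. u j \<in> borel_measurable S" unfolding u_def by measurable
  have intu: "(\<integral>\<^sup>+x. u j x \<partial>S) \<le> ennreal ((1/2)^j)" for j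
  proof -
    have "(\<integral>\<^sup>+x. u j x \<partial>S) = ennreal (\<integral>x. \<bar>g (Suc j) x - g j x\<bar> \<partial>S)"
      unfolding u_def by (rule nn_integral_eq_integral) (auto intro!: integrable_abs integrable_diff gi)
    also have "(\<integral>x. \<bar>g (Suc j) x - g j x\<bar> \<partial>S) = (\<integral>x. \<bar>g j x - g (Suc j) x\<bar> \<partial>S)"
      by (simp add: abs_minus_commute)
    also have "\<dots> \<le> (1/2)^j" by (rule cau) simp
    finally show ?thesis by (simp add: ennreal_leI)
  qed
  have "(\<integral>\<^sup>+x. (\<Sum>j. u j x) \<partial>S) = (\<Sum>j. \<integral>\<^sup>+x. u j x \<partial>S)"
    by (rule nn_integral_suminf) simp
  also have "\<dots> \<le> (\<Sum>j. ennreal ((1/2)^j))"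
    by (intro suminf_le intu) auto
  also have "\<dots> = ennreal (\<Sum>j. (1/2)^j)"
    by (rule suminf_ennreal2) (auto intro: summable_geometric)
  finally have "(\<integral>\<^sup>+x. (\<Sum>j. u j x) \<partial>S) \<noteq> \<infinity>"
    by (auto simp: top_unique)
  then have "AE x in S. (\<Sum>j. u j x) \<noteq> \<infinity>"
    by (intro nn_integral_noteq_infinite) auto
  then have conv: "AE x in S. convergent (\<lambda>j. g j x)"
  proof eventually_elim
    case (elim x)
    then have "summable (\<lambda>j. \<bar>g (Suc j) x - g j x\<bar>)"
      using summable_suminf_not_top[of "\<lambda>j. \<bar>g (Suc j) x - g j x\<bar>"] unfolding u_def by auto
    then have "summable (\<lambda>j. g (Suc j) x - g j x)" by (rule summable_rabs_cancel)
    then have "(\<lambda>n. \<Sum>j<n. g (Suc j) x - g j x) \<longlonglongrightarrow> (\<Sum>j. g (Suc j) x - g j x)"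
      by (rule summable_LIMSEQ)
    then have "(\<lambda>n. g 0 x + (\<Sum>j<n. g (Suc j) x - g j x)) \<longlonglongrightarrow> g 0 x + (\<Sum>j. g (Suc j) x - g j x)"
      by (intro tendsto_add tendsto_const)
    then have "(\<lambda>n. g n x) \<longlonglongrightarrow> g 0 x + (\<Sum>j. g (Suc j) x - g j x)"
      by (simp add: sum_lessThan_telescope[of "\<lambda>j. g j x"])
    then show ?case by (auto simp: convergent_def)
  qed
  define F0 where "F0 x = lim (\<lambda>j. g j x)" for x
  define F where "F x = max 0 (F0 x)" for x
  have F0m[measurable]: "F0 \<in> borel_measurable S" unfolding F0_def by measurable
  have Fm[measurable]: "F \<in> borel_measurable S" unfolding F_def by measurable
  have Fn: "\<forall>x\<in>space S. 0 \<le> F x" by (simp add: F_def)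
  have lim: "AE x in S. (\<lambda>j. g j x) \<longlonglongrightarrow> F x"
    using conv AE_space
  proof eventually_elim
    case (elim x)
    then have l: "(\<lambda>j. g j x) \<longlonglongrightarrow> F0 x" unfolding F0_def by (simp add: convergent_LIMSEQ_iff)
    then have "0 \<le> F0 x" by (rule LIMSEQ_le_const) (use elim gn in auto)
    then show ?case using l by (simp add: F_def)
  qed
  have tail: "integrable S (\<lambda>x. g j x - F x) \<and> (\<integral>x. \<bar>g j x - F x\<bar> \<partial>S) \<le> (1/2)^j" for j
  proof -
    have ae: "AE x in S. liminf (\<lambda>l. ennreal \<bar>g j x - g l x\<bar>) = ennreal \<bar>g j x - F x\<bar>"
      using lim
    proof eventually_elim
      case (elim x)
      have "(\<lambda>l. ennreal \<bar>g j x - g l x\<bar>) \<longlonglongrightarrow> ennreal \<bar>g j x - F x\<bar>"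
        by (intro tendsto_ennrealI tendsto_rabs tendsto_diff tendsto_const elim)
      then show ?case by (intro lim_imp_Liminf) auto
    qed
    have "(\<integral>\<^sup>+x. ennreal \<bar>g j x - F x\<bar> \<partial>S) = (\<integral>\<^sup>+x. liminf (\<lambda>l. ennreal \<bar>g j x - g l x\<bar>) \<partial>S)"
      using ae by (intro nn_integral_cong_AE) (auto elim!: AE_mp)
    also have "\<dots> \<le> liminf (\<lambda>l. \<integral>\<^sup>+x. ennreal \<bar>g j x - g l x\<bar> \<partial>S)"
      by (rule nn_integral_liminf) simp
    also have "\<dots> \<le> liminf (\<lambda>l. ennreal ((1/2)^j))"
    proof (rule Liminf_mono)
      show "\<forall>\<^sub>F l in sequentially. (\<integral>\<^sup>+x. ennreal \<bar>g j x - g l x\<bar> \<partial>S) \<le> ennreal ((1/2)^j)"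
        unfolding eventually_sequentially
      proof (intro exI allI impI)
        fix l assume "j \<le> l"
        have "(\<integral>\<^sup>+x. ennreal \<bar>g j x - g l x\<bar> \<partial>S) = ennreal (\<integral>x. \<bar>g j x - g l x\<bar> \<partial>S)"
          by (rule nn_integral_eq_integral) (auto intro!: integrable_abs integrable_diff gi)
        also have "\<dots> \<le> ennreal ((1/2)^j)" using cau[OF \<open>j \<le> l\<close>] by (simp add: ennreal_leI)
        finally show "(\<integral>\<^sup>+x. ennreal \<bar>g j x - g l x\<bar> \<partial>S) \<le> ennreal ((1/2)^j)" .
      qed
    qed
    also have "\<dots> = ennreal ((1/2)^j)" by (simp add: Liminf_const)
    finally have le: "(\<integral>\<^sup>+x. ennreal \<bar>g j x - F x\<bar> \<partial>S) \<le> ennreal ((1/2)^j)" .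
    have int: "integrable S (\<lambda>x. g j x - F x)"
      unfolding integrable_iff_bounded using le by (auto simp: top_unique less_top[symmetric] intro: neq_top_trans)
    have "ennreal (\<integral>x. \<bar>g j x - F x\<bar> \<partial>S) = (\<integral>\<^sup>+x. ennreal \<bar>g j x - F x\<bar> \<partial>S)"
      by (rule nn_integral_eq_integral[symmetric]) (auto intro!: integrable_abs int)
    with le have "ennreal (\<integral>x. \<bar>g j x - F x\<bar> \<partial>S) \<le> ennreal ((1/2)^j)" by simp
    then have "(\<integral>x. \<bar>g j x - F x\<bar> \<partial>S) \<le> (1/2)^j" by (simp add: ennreal_le_iff)
    with int show ?thesis by simp
  qed
  have "integrable S (\<lambda>x. g 0 x - (g 0 x - F x))"
    using gi[of 0] conjunct1[OF tail[of 0]] by (rule Bochner_Integration.integrable_diff)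
  then have "integrable S F" by simp
  then show ?thesis using Fm Fn lim tail by blast
qed


lemma measure_density_real:
  fixes S :: "'a measure" and f :: "'a \<Rightarrow> real"
  assumes f[measurable]: "f \<in> borel_measurable S" and fn: "\<And>x. x \<in> space S \<Longrightarrow> 0 \<le> f x"
    and A[measurable]: "A \<in> sets S"
  shows "measure (density S (\<lambda>x. ennreal (f x))) A = (\<integral>x. indicator A x * f x \<partial>S)"
proof -
  have "measure (density S (\<lambda>x. ennreal (f x))) A = enn2real (\<integral>\<^sup>+x. ennreal (f x) * indicator A x \<partial>S)"
    using A by (simp add: measure_def emeasure_density)
  also have "\<dots> = (\<integral>x. indicator A x * f x \<partial>S)"
    by (rule enn2real_nn_integral_eq_integral) (auto simp: fn split: split_indicator)
  finally show ?thesis .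
qed

lemma tv_density_bound:
  fixes S Q :: "'a measure" and f g :: "'a \<Rightarrow> real"
  assumes sS: "sets S = sets Q"
    and f[measurable]: "f \<in> borel_measurable S" and fn: "\<And>x. x \<in> space S \<Longrightarrow> 0 \<le> f x"
    and g[measurable]: "g \<in> borel_measurable S" and gn: "\<And>x. x \<in> space S \<Longrightarrow> 0 \<le> g x"
    and fi: "integrable S f" and gi: "integrable S g"
  shows "tv_dist Q (density S (\<lambda>x. ennreal (f x))) (density S (\<lambda>x. ennreal (g x))) \<le> (\<integral>x. \<bar>f x - g x\<bar> \<partial>S)"
    "0 \<le> tv_dist Q (density S (\<lambda>x. ennreal (f x))) (density S (\<lambda>x. ennreal (g x)))"
proof -
  have bnd: "\<bar>measure (density S (\<lambda>x. ennreal (f x))) A - measure (density S (\<lambda>x. ennreal (g x))) A\<bar> \<le> (\<integral>x. \<bar>f x - g x\<bar> \<partial>S)"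
    if A: "A \<in> sets Q" for A
  proof -
    have AS: "A \<in> sets S" using A sS by simp
    have i1: "integrable S (\<lambda>x. indicator A x * f x)" using integrable_mult_indicator[OF AS fi] by simp
    have i2: "integrable S (\<lambda>x. indicator A x * g x)" using integrable_mult_indicator[OF AS gi] by simp
    have "measure (density S (\<lambda>x. ennreal (f x))) A - measure (density S (\<lambda>x. ennreal (g x))) A
        = (\<integral>x. indicator A x * f x \<partial>S) - (\<integral>x. indicator A x * g x \<partial>S)"
      using measure_density_real[OF f fn AS] measure_density_real[OF g gn AS] by simp
    also have "\<dots> = (\<integral>x. indicator A x * f x - indicator A x * g x \<partial>S)"
      using i1 i2 by simp
    finally have eq: "measure (density S (\<lambda>x. ennreal (f x))) A - measure (density S (\<lambda>x. ennreal (g x))) A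
        = (\<integral>x. indicator A x * f x - indicator A x * g x \<partial>S)" .
    have "\<bar>\<integral>x. indicator A x * f x - indicator A x * g x \<partial>S\<bar> \<le> (\<integral>x. \<bar>indicator A x * f x - indicator A x * g x\<bar> \<partial>S)"
      by (rule integral_abs_bound)
    also have "\<dots> \<le> (\<integral>x. \<bar>f x - g x\<bar> \<partial>S)"
      using i1 i2 fi gi
      by (intro integral_mono integrable_abs Bochner_Integration.integrable_diff) (auto split: split_indicator)
    finally show ?thesis using eq by simp
  qed
  show "tv_dist Q (density S (\<lambda>x. ennreal (f x))) (density S (\<lambda>x. ennreal (g x))) \<le> (\<integral>x. \<bar>f x - g x\<bar> \<partial>S)"
    unfolding tv_dist_def by (rule cSUP_least) (auto intro: bnd)
  show "0 \<le> tv_dist Q (density S (\<lambda>x. ennreal (f x))) (density S (\<lambda>x. ennreal (g x)))"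
    unfolding tv_dist_def
    by (rule cSUP_upper2[where x="{}"]) (auto intro!: bdd_aboveI2 bnd)
qed

lemma mix_cauchy:
  fixes Q S :: "'a measure" and D :: "'a measure set" and f1 f2 :: "'a \<Rightarrow> real" and c0 e :: real
  assumes S: "finite_measure S" and sS: "sets S = sets Q" and cv: "convex_PMs Q D"
    and f1[measurable]: "f1 \<in> borel_measurable S" and f1n: "\<And>x. x \<in> space S \<Longrightarrow> 0 \<le> f1 x"
    and f2[measurable]: "f2 \<in> borel_measurable S" and f2n: "\<And>x. x \<in> space S \<Longrightarrow> 0 \<le> f2 x"
    and P1: "density S (\<lambda>x. ennreal (f1 x)) \<in> D" and P2: "density S (\<lambda>x. ennreal (f2 x)) \<in> D"
    and i1: "integrable S (\<lambda>x. xlx (f1 x))" and i2: "integrable S (\<lambda>x. xlx (f2 x))"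
    and n1: "integrable S f1" "(\<integral>x. f1 x \<partial>S) = 1"
    and n2: "integrable S f2" "(\<integral>x. f2 x \<partial>S) = 1"
    and low: "\<And>P. P \<in> D \<Longrightarrow> ereal c0 \<le> Idiv P S"
    and e: "0 < e"
  shows "(\<integral>x. \<bar>f1 x - f2 x\<bar> \<partial>S) \<le> e + (2/e) * ((\<integral>x. xlx (f1 x) \<partial>S) + (\<integral>x. xlx (f2 x) \<partial>S) - 2*c0)"
proof -
  interpret finite_measure S by fact
  define m where "m x = 1/2 * f1 x + (1 - 1/2) * f2 x" for x
  have mm[measurable]: "m \<in> borel_measurable S" unfolding m_def by measurable
  have mn: "\<And>x. x \<in> space S \<Longrightarrow> 0 \<le> m x" using f1n f2n by (simp add: m_def)
  have "mix Q (1/2) (density S (\<lambda>x. ennreal (f1 x))) (density S (\<lambda>x. ennreal (f2 x))) \<in> D"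
    using cv P1 P2 unfolding convex_PMs_def by auto
  then have mD: "density S (\<lambda>x. ennreal (m x)) \<in> D"
    unfolding m_def mix_density[OF sS f1 f2 f1n f2n, of "1/2", simplified] by simp
  have pw: "\<bar>xlx (m x)\<bar> \<le> 1 + \<bar>xlx (f1 x)\<bar> + \<bar>xlx (f2 x)\<bar>" if x: "x \<in> space S" for x
  proof -
    have "xlx ((1 - 1/2) * f1 x + 1/2 * f2 x) \<le> (1 - 1/2) * xlx (f1 x) + 1/2 * xlx (f2 x)"
      by (rule xlx_convex) (use f1n f2n x in auto)
    moreover have "m x = (1 - 1/2) * f1 x + 1/2 * f2 x" by (simp add: m_def)
    moreover have "-1 \<le> xlx (m x)" using mn[OF x] by (rule xlx_ge_m1)
    ultimately have "xlx (m x) \<le> 1/2 * xlx (f1 x) + 1/2 * xlx (f2 x)" by simp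
    then show ?thesis using \<open>-1 \<le> xlx (m x)\<close> by linarith
  qed
  have im: "integrable S (\<lambda>x. xlx (m x))"
  proof (rule Bochner_Integration.integrable_bound)
    show "integrable S (\<lambda>x. 1 + \<bar>xlx (f1 x)\<bar> + \<bar>xlx (f2 x)\<bar>)" using i1 i2 by auto
    show "AE x in S. norm (xlx (m x)) \<le> norm (1 + \<bar>xlx (f1 x)\<bar> + \<bar>xlx (f2 x)\<bar>)"
      using pw by (auto intro!: AE_I2)
  qed simp
  have "Idiv (density S (\<lambda>x. ennreal (m x))) S = ereal (\<integral>x. xlx (m x) \<partial>S)"
    using Idiv_density[OF S mm mn] im by simp
  then have cm: "c0 \<le> (\<integral>x. xlx (m x) \<partial>S)" using low[OF mD] by simp
  have intm: "(\<integral>x. m x \<partial>S) = 1" using n1 n2 by (simp add: m_def)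
  have pw2: "\<bar>f1 x - f2 x\<bar> \<le> e * m x + (2/e) * (xlx (f1 x) + xlx (f2 x) - 2 * xlx (m x))"
    if x: "x \<in> space S" for x
  proof -
    have eq: "m x = (f1 x + f2 x)/2" by (simp add: m_def)
    show ?thesis unfolding eq by (rule xlx_mid[OF f1n[OF x] f2n[OF x] e])
  qed
  have mi: "integrable S m" unfolding m_def using n1 n2 by auto
  have i12: "integrable S (\<lambda>x. xlx (f1 x) + xlx (f2 x))" using i1 i2 by (rule Bochner_Integration.integrable_add)
  have i2m: "integrable S (\<lambda>x. 2 * xlx (m x))" using im by (rule integrable_mult_right)
  have iZ: "integrable S (\<lambda>x. xlx (f1 x) + xlx (f2 x) - 2 * xlx (m x))"
    using i12 i2m by (rule Bochner_Integration.integrable_diff)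
  have iZ2: "integrable S (\<lambda>x. (2/e) * (xlx (f1 x) + xlx (f2 x) - 2 * xlx (m x)))"
    using iZ by (rule integrable_mult_right)
  have iem: "integrable S (\<lambda>x. e * m x)" using mi by (rule integrable_mult_right)
  have iR: "integrable S (\<lambda>x. e * m x + (2/e) * (xlx (f1 x) + xlx (f2 x) - 2 * xlx (m x)))"
    using iem iZ2 by (rule Bochner_Integration.integrable_add)
  have iabs: "integrable S (\<lambda>x. \<bar>f1 x - f2 x\<bar>)"
    using n1 n2 by (intro integrable_abs Bochner_Integration.integrable_diff) auto
  have "(\<integral>x. \<bar>f1 x - f2 x\<bar> \<partial>S) \<le> (\<integral>x. e * m x + (2/e) * (xlx (f1 x) + xlx (f2 x) - 2 * xlx (m x)) \<partial>S)"
    using iabs iR pw2 by (rule integral_mono)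
  also have "\<dots> = e * (\<integral>x. m x \<partial>S) + (2/e) * ((\<integral>x. xlx (f1 x) \<partial>S) + (\<integral>x. xlx (f2 x) \<partial>S) - 2 * (\<integral>x. xlx (m x) \<partial>S))"
    using iem iZ2 iZ i12 i2m mi im i1 i2 by simp
  also have "\<dots> \<le> e + (2/e) * ((\<integral>x. xlx (f1 x) \<partial>S) + (\<integral>x. xlx (f2 x) \<partial>S) - 2*c0)"
  proof -
    have "(2/e) * ((\<integral>x. xlx (f1 x) \<partial>S) + (\<integral>x. xlx (f2 x) \<partial>S) - 2 * (\<integral>x. xlx (m x) \<partial>S))
        \<le> (2/e) * ((\<integral>x. xlx (f1 x) \<partial>S) + (\<integral>x. xlx (f2 x) \<partial>S) - 2*c0)"
      using cm e by (intro mult_left_mono) auto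
    then show ?thesis using intm by simp
  qed
  finally show ?thesis .
qed

lemma xlx_p1: "0 \<le> x \<Longrightarrow> 0 \<le> xlx x + 1"
  using xlx_ge_m1[of x] by linarith

theorem Iproj_exists:
  fixes Q S :: "'a measure" and D :: "'a measure set"
  assumes S: "finite_measure S" and sS: "sets S = sets Q"
    and D: "D \<subseteq> PMs Q" and vc: "variation_closed Q D" and cv: "convex_PMs Q D"
    and ex: "\<exists>P\<in>D. Idiv P S < \<infinity>"
  shows "\<exists>R. is_Iproj S D R"
proof -
  interpret finite_measure S by fact
  have Dp: "\<And>P. P \<in> D \<Longrightarrow> prob_space P \<and> sets P = sets S" using D sS by (auto simp: PMs_def)
  define MS where "MS = measure S (space S)"
  define c where "c = (INF P\<in>D. Idiv P S)"
  have low: "\<And>P. P \<in> D \<Longrightarrow> - ereal MS \<le> Idiv P S" using Idiv_lower[OF S] Dp unfolding MS_def by blast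
  have cl: "- ereal MS \<le> c" unfolding c_def by (rule INF_greatest) (rule low)
  from ex obtain P0 where P0: "P0 \<in> D" "Idiv P0 S < \<infinity>" by blast
  have "c \<le> Idiv P0 S" unfolding c_def using P0(1) by (rule INF_lower)
  then have cu: "c < \<infinity>" using P0(2) by (rule le_less_trans)
  obtain c0 where c0: "c = ereal c0" using cl cu by (cases c) auto
  have lowc: "\<And>P. P \<in> D \<Longrightarrow> ereal c0 \<le> Idiv P S" unfolding c0[symmetric] c_def by (rule INF_lower)
  have "\<forall>k. \<exists>P\<in>D. Idiv P S < ereal (c0 + 1/real (Suc k))"
  proof
    fix k :: nat
    have "c < ereal (c0 + 1/real (Suc k))" using c0 by simp
    then show "\<exists>P\<in>D. Idiv P S < ereal (c0 + 1/real (Suc k))" unfolding c_def by (simp add: INF_less_iff)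
  qed
  then have "\<exists>Pk. \<forall>k. Pk k \<in> D \<and> Idiv (Pk k) S < ereal (c0 + 1/real (Suc k))"
    unfolding Bex_def by (rule choice)
  then obtain Pk where PkDI: "\<forall>k. Pk k \<in> D \<and> Idiv (Pk k) S < ereal (c0 + 1/real (Suc k))" by blast
  have PkD: "\<And>k. Pk k \<in> D" and PkI: "\<And>k. Idiv (Pk k) S < ereal (c0 + 1/real (Suc k))"
    using PkDI by auto
  have Pkfin: "Idiv (Pk k) S < \<infinity>" for k using PkI[of k] by (rule order.strict_trans) simp
  define f where "f k x = enn2real (RN_deriv S (Pk k) x)" for k x
  have fm[measurable]: "\<And>k. f k \<in> borel_measurable S" unfolding f_def by measurable
  have fn: "\<And>k x. 0 \<le> f k x" unfolding f_def by simp
  have Pkd: "Pk k = density S (\<lambda>x. ennreal (f k x))" for k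
    using Idiv_finite_rep(3)[OF S _ Pkfin[of k]] Dp[OF PkD[of k]] unfolding f_def by blast
  have IdPk: "Idiv (Pk k) S = (if integrable S (\<lambda>x. xlx (f k x)) then ereal (\<integral>x. xlx (f k x) \<partial>S) else \<infinity>)" for k
    unfolding Pkd by (rule Idiv_density[OF S fm fn])
  have ixk: "integrable S (\<lambda>x. xlx (f k x))" for k using IdPk[of k] Pkfin[of k] by (auto split: if_splits)
  define H where "H k = (\<integral>x. xlx (f k x) \<partial>S)" for k
  have HI: "Idiv (Pk k) S = ereal (H k)" for k using IdPk[of k] ixk[of k] by (simp add: H_def)
  have Hl: "c0 \<le> H k" for k using lowc[OF PkD[of k]] HI[of k] by simp
  have Hu: "H k < c0 + 1/real (Suc k)" for k using PkI[of k] HI[of k] by simp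
  have fi: "integrable S (f k)" "(\<integral>x. f k x \<partial>S) = 1" for k
    using density_prob_int[OF fm fn, of k] Dp[OF PkD[of k]] Pkd[of k] by auto
  have cauchy: "(\<integral>x. \<bar>f k x - f l x\<bar> \<partial>S) \<le> e + (2/e) * (1/real (Suc k) + 1/real (Suc l))"
    if e: "0 < e" for k l e
  proof -
    have "(\<integral>x. \<bar>f k x - f l x\<bar> \<partial>S) \<le> e + (2/e) * (H k + H l - 2*c0)"
      unfolding H_def
      by (rule mix_cauchy[OF S sS cv fm fn fm fn _ _ ixk ixk fi fi lowc e])
        (use PkD Pkd in auto)
    also have "\<dots> \<le> e + (2/e) * (1/real (Suc k) + 1/real (Suc l))"
      using Hu[of k] Hu[of l] Hl[of k] Hl[of l] e by (intro add_left_mono mult_left_mono) auto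
    finally show ?thesis .
  qed
  have cauchy2: "\<exists>N. \<forall>k\<ge>N. \<forall>l\<ge>N. (\<integral>x. \<bar>f k x - f l x\<bar> \<partial>S) < \<delta>" if d: "0 < \<delta>" for \<delta>
  proof -
    obtain N :: nat where N: "16 / \<delta>^2 < real N" using reals_Archimedean2 by blast
    have NN: "1 / real (Suc N) < \<delta>^2 / 16"
    proof -
      have "16 / \<delta>^2 < real (Suc N)" using N by simp
      then have "16 < real (Suc N) * \<delta>^2" using d by (simp add: field_simps)
      then show ?thesis using d by (simp add: field_simps)
    qed
    show ?thesis
    proof (intro exI allI impI)
      fix k l assume k: "N \<le> k" and l: "N \<le> l"
      have k1: "1/real (Suc k) \<le> 1/real (Suc N)" using k by (simp add: frac_le)
      have l1: "1/real (Suc l) \<le> 1/real (Suc N)" using l by (simp add: frac_le)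
      have "(\<integral>x. \<bar>f k x - f l x\<bar> \<partial>S) \<le> \<delta>/2 + (2/(\<delta>/2)) * (1/real (Suc k) + 1/real (Suc l))"
        using d by (intro cauchy) simp
      also have "(2/(\<delta>/2)) * (1/real (Suc k) + 1/real (Suc l)) \<le> (4/\<delta>) * (2 * (1/real (Suc N)))"
        using k1 l1 d by (intro mult_mono) auto
      also have "(4/\<delta>) * (2 * (1/real (Suc N))) < (4/\<delta>) * (2 * (\<delta>^2/16))"
        using NN d by (intro mult_strict_left_mono) auto
      also have "(4/\<delta>) * (2 * (\<delta>^2/16)) = \<delta>/2" using d by (simp add: field_simps power2_eq_square)
      finally show "(\<integral>x. \<bar>f k x - f l x\<bar> \<partial>S) < \<delta>" by simp
    qed
  qed
  have "\<forall>j. \<exists>N. \<forall>k\<ge>N. \<forall>l\<ge>N. (\<integral>x. \<bar>f k x - f l x\<bar> \<partial>S) < (1/2)^j"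
    using cauchy2 by simp
  then have "\<exists>Nf. \<forall>j. \<forall>k\<ge>Nf j. \<forall>l\<ge>Nf j. (\<integral>x. \<bar>f k x - f l x\<bar> \<partial>S) < (1/2)^j"
    by (rule choice)
  then obtain Nf where Nf0: "\<forall>j. \<forall>k\<ge>Nf j. \<forall>l\<ge>Nf j. (\<integral>x. \<bar>f k x - f l x\<bar> \<partial>S) < (1/2)^j" by blast
  have Nf: "\<And>j k l. Nf j \<le> k \<Longrightarrow> Nf j \<le> l \<Longrightarrow> (\<integral>x. \<bar>f k x - f l x\<bar> \<partial>S) < (1/2)^j"
    using Nf0 by blast
  define \<sigma> where "\<sigma> j = (\<Sum>i\<le>j. Nf i) + j" for j
  have smono: "strict_mono \<sigma>" unfolding strict_mono_Suc_iff \<sigma>_def by simp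
  have sN: "Nf j \<le> \<sigma> j" for j unfolding \<sigma>_def
    using member_le_sum[of j "{..j}" Nf] by simp
  have sge: "j \<le> \<sigma> j" for j unfolding \<sigma>_def by simp
  define g where "g j = f (\<sigma> j)" for j
  have gm[measurable]: "\<And>j. g j \<in> borel_measurable S" unfolding g_def by simp
  have cau: "(\<integral>x. \<bar>g j x - g l x\<bar> \<partial>S) \<le> (1/2)^j" if "j \<le> l" for j l
  proof -
    have "\<sigma> j \<le> \<sigma> l" using smono that by (simp add: strict_mono_less_eq)
    then show ?thesis unfolding g_def using Nf[of j "\<sigma> j" "\<sigma> l"] sN[of j] by simp
  qed
  have "\<exists>F. F \<in> borel_measurable S \<and> (\<forall>x\<in>space S. 0 \<le> F x) \<and> integrable S F \<and>
     (AE x in S. (\<lambda>j. g j x) \<longlonglongrightarrow> F x) \<and> (\<forall>j. (\<integral>x. \<bar>g j x - F x\<bar> \<partial>S) \<le> (1/2)^j)"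
    by (rule L1_complete_geo[OF S gm _ _ cau]) (use fn fi in \<open>auto simp: g_def\<close>)
  then obtain F where Fm[measurable]: "F \<in> borel_measurable S" and Fn: "\<forall>x\<in>space S. 0 \<le> F x"
    and Fi: "integrable S F" and Flim: "AE x in S. (\<lambda>j. g j x) \<longlonglongrightarrow> F x"
    and Ftail: "\<And>j. (\<integral>x. \<bar>g j x - F x\<bar> \<partial>S) \<le> (1/2)^j"
    by blast
  define R where "R = density S (\<lambda>x. ennreal (F x))"
  have gi: "integrable S (g j)" for j unfolding g_def by (rule fi)
  have intF: "(\<integral>x. F x \<partial>S) = 1"
  proof (rule ccontr)
    assume ne: "(\<integral>x. F x \<partial>S) \<noteq> 1"
    have b: "\<bar>(\<integral>x. F x \<partial>S) - 1\<bar> \<le> (1/2)^j" for j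
    proof -
      have "(\<integral>x. F x \<partial>S) - 1 = (\<integral>x. F x \<partial>S) - (\<integral>x. g j x \<partial>S)" using fi unfolding g_def by simp
      also have "\<dots> = (\<integral>x. F x - g j x \<partial>S)" using Fi gi by simp
      finally have "\<bar>(\<integral>x. F x \<partial>S) - 1\<bar> = \<bar>\<integral>x. F x - g j x \<partial>S\<bar>" by simp
      also have "\<dots> \<le> (\<integral>x. \<bar>F x - g j x\<bar> \<partial>S)" by (rule integral_abs_bound)
      also have "\<dots> = (\<integral>x. \<bar>g j x - F x\<bar> \<partial>S)" by (simp add: abs_minus_commute)
      finally show ?thesis using Ftail[of j] by simp
    qed
    obtain j where "(1/2::real)^j < \<bar>(\<integral>x. F x \<partial>S) - 1\<bar>" using real_arch_pow_inv[of "\<bar>(\<integral>x. F x \<partial>S) - 1\<bar>" "1/2"] ne by auto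
    with b[of j] show False by simp
  qed
  have Rprob: "prob_space R"
  proof (rule prob_spaceI)
    have "emeasure R (space R) = (\<integral>\<^sup>+x. ennreal (F x) \<partial>S)"
      unfolding R_def by (subst emeasure_density) (auto intro!: nn_integral_cong)
    also have "\<dots> = ennreal (\<integral>x. F x \<partial>S)" using Fi Fn by (intro nn_integral_eq_integral) auto
    finally show "emeasure R (space R) = 1" using intF by simp
  qed
  have RPMs: "R \<in> PMs Q" using Rprob sS unfolding PMs_def R_def by simp
  have tv: "(\<lambda>j. tv_dist Q (Pk (\<sigma> j)) R) \<longlonglongrightarrow> 0"
  proof (rule tendsto_sandwich[of "\<lambda>_. 0" _ _ "\<lambda>j. (1/2::real)^j"])
    show "\<forall>\<^sub>F j in sequentially. 0 \<le> tv_dist Q (Pk (\<sigma> j)) R"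
      unfolding Pkd R_def using tv_density_bound(2)[OF sS fm _ Fm _ fi(1) Fi] fn Fn by auto
    show "\<forall>\<^sub>F j in sequentially. tv_dist Q (Pk (\<sigma> j)) R \<le> (1/2)^j"
    proof (rule always_eventually, rule allI)
      fix j
      have "tv_dist Q (Pk (\<sigma> j)) R \<le> (\<integral>x. \<bar>f (\<sigma> j) x - F x\<bar> \<partial>S)"
        unfolding Pkd R_def using tv_density_bound(1)[OF sS fm _ Fm _ fi(1) Fi] fn Fn by auto
      also have "\<dots> \<le> (1/2)^j" using Ftail[of j] unfolding g_def by simp
      finally show "tv_dist Q (Pk (\<sigma> j)) R \<le> (1/2)^j" .
    qed
  qed (auto intro!: LIMSEQ_realpow_zero)
  have RD: "R \<in> D"
    by (rule vc[unfolded variation_closed_def, rule_format, of "\<lambda>k. Pk (\<sigma> k)" R]) (use RPMs tv PkD in auto)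
  define u where "u j x = ennreal (xlx (g j x) + 1)" for j x
  have um[measurable]: "\<And>j. u j \<in> borel_measurable S" unfolding u_def by measurable
  have ae: "AE x in S. liminf (\<lambda>j. u j x) = ennreal (xlx (F x) + 1)"
    using Flim
  proof eventually_elim
    case (elim x)
    have "(\<lambda>j. xlx (g j x)) \<longlonglongrightarrow> xlx (F x)" by (rule isCont_tendsto_compose[OF isCont_phi elim])
    then have "(\<lambda>j. u j x) \<longlonglongrightarrow> ennreal (xlx (F x) + 1)" unfolding u_def
      by (intro tendsto_ennrealI tendsto_add tendsto_const)
    then show ?case by (intro lim_imp_Liminf) auto
  qed
  have iu: "(\<integral>\<^sup>+x. u j x \<partial>S) = ennreal (H (\<sigma> j) + MS)" for j
  proof -
    have "(\<integral>\<^sup>+x. u j x \<partial>S) = ennreal (\<integral>x. xlx (g j x) + 1 \<partial>S)"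
      unfolding u_def using ixk[of "\<sigma> j"] xlx_p1[OF fn]
      by (intro nn_integral_eq_integral) (auto simp: g_def intro!: AE_I2 add_nonneg_nonneg)
    also have "(\<integral>x. xlx (g j x) + 1 \<partial>S) = H (\<sigma> j) + MS"
      using ixk[of "\<sigma> j"] by (simp add: g_def H_def MS_def)
    finally show ?thesis .
  qed
  have "(\<integral>\<^sup>+x. ennreal (xlx (F x) + 1) \<partial>S) = (\<integral>\<^sup>+x. liminf (\<lambda>j. u j x) \<partial>S)"
    using ae by (intro nn_integral_cong_AE) (auto elim!: AE_mp)
  also have "\<dots> \<le> liminf (\<lambda>j. \<integral>\<^sup>+x. u j x \<partial>S)"
    by (rule nn_integral_liminf) simp
  also have "\<dots> \<le> liminf (\<lambda>j. ennreal (c0 + MS + inverse (real (Suc j))))"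
  proof (rule Liminf_mono, rule always_eventually, rule allI)
    fix j
    have "H (\<sigma> j) < c0 + 1/real (Suc (\<sigma> j))" by (rule Hu)
    also have "1/real (Suc (\<sigma> j)) \<le> 1/real (Suc j)" using sge[of j] by (simp add: frac_le)
    finally have "H (\<sigma> j) + MS \<le> c0 + MS + inverse (real (Suc j))" by (simp add: inverse_eq_divide)
    then show "(\<integral>\<^sup>+x. u j x \<partial>S) \<le> ennreal (c0 + MS + inverse (real (Suc j)))"
      unfolding iu by (rule ennreal_leI)
  qed
  also have "\<dots> = ennreal (c0 + MS)"
  proof (rule lim_imp_Liminf)
    show "(\<lambda>j. ennreal (c0 + MS + inverse (real (Suc j)))) \<longlonglongrightarrow> ennreal (c0 + MS)"
      using tendsto_add[OF tendsto_const LIMSEQ_inverse_real_of_nat, of "c0 + MS"] by (intro tendsto_ennrealI) simp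
  qed simp
  finally have fatou: "(\<integral>\<^sup>+x. ennreal (xlx (F x) + 1) \<partial>S) \<le> ennreal (c0 + MS)" .
  have iF1: "integrable S (\<lambda>x. xlx (F x) + 1)"
  proof (rule integrableI_nonneg)
    show "AE x in S. 0 \<le> xlx (F x) + 1" using Fn xlx_p1 by (auto intro!: AE_I2)
    have "ennreal (c0 + MS) < \<infinity>" by simp
    with fatou show "(\<integral>\<^sup>+x. ennreal (xlx (F x) + 1) \<partial>S) < \<infinity>" by (rule le_less_trans)
  qed simp
  have iF: "integrable S (\<lambda>x. xlx (F x))"
  proof -
    have "integrable S (\<lambda>x. 1::real)" by simp
    from Bochner_Integration.integrable_diff[OF iF1 this] show ?thesis by simp
  qed
  have "ennreal (\<integral>x. xlx (F x) + 1 \<partial>S) = (\<integral>\<^sup>+x. ennreal (xlx (F x) + 1) \<partial>S)"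
    using iF1 Fn xlx_p1 by (intro nn_integral_eq_integral[symmetric]) auto
  with fatou have "ennreal (\<integral>x. xlx (F x) + 1 \<partial>S) \<le> ennreal (c0 + MS)" by simp
  moreover have "0 \<le> c0 + MS" using cl c0 by simp
  ultimately have "(\<integral>x. xlx (F x) + 1 \<partial>S) \<le> c0 + MS" by (simp add: ennreal_le_iff)
  then have FH: "(\<integral>x. xlx (F x) \<partial>S) \<le> c0" using iF by (simp add: MS_def)
  have IdR: "Idiv R S = ereal (\<integral>x. xlx (F x) \<partial>S)"
    unfolding R_def using Idiv_density[OF S Fm] Fn iF by simp
  have "Idiv R S = c" using FH IdR lowc[OF RD] c0 by (simp add: antisym)
  then have "is_Iproj S D R" unfolding is_Iproj_def using RD cu c_def by simp
  then show ?thesis by blast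
qed

lemma ln_Suc_at_top: "filterlim (\<lambda>k. ln (real (Suc (Suc k)))) at_top sequentially"
  by real_asymp

lemma Iproj_V_fin:
  fixes Q S R V :: "'a measure" and D :: "'a measure set"
  assumes S: "finite_measure S" and sS: "sets S = sets Q"
    and D: "D \<subseteq> PMs Q" and cv: "convex_PMs Q D"
    and R: "is_Iproj S D R" and V: "V \<in> D" and Vf: "Idiv V S < \<infinity>"
  shows "Idiv V R < \<infinity>"
proof -
  interpret finite_measure S by fact
  have RD: "R \<in> D" and RI: "Idiv R S = (INF P\<in>D. Idiv P S)" and Rf: "Idiv R S < \<infinity>"
    using R unfolding is_Iproj_def by auto
  have Dp: "\<And>P. P \<in> D \<Longrightarrow> prob_space P \<and> sets P = sets S" using D sS by (auto simp: PMs_def)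
  have Rmin: "\<And>P. P \<in> D \<Longrightarrow> Idiv R S \<le> Idiv P S" unfolding RI by (rule INF_lower)
  define r where "r x = enn2real (RN_deriv S R x)" for x
  define v where "v x = enn2real (RN_deriv S V x)" for x
  have rm[measurable]: "r \<in> borel_measurable S" unfolding r_def by measurable
  have vm[measurable]: "v \<in> borel_measurable S" unfolding v_def by measurable
  have rn: "\<And>x. 0 \<le> r x" unfolding r_def by simp
  have vn: "\<And>x. 0 \<le> v x" unfolding v_def by simp
  have Rd: "R = density S (\<lambda>x. ennreal (r x))"
    using Idiv_finite_rep(3)[OF S _ Rf] Dp[OF RD] unfolding r_def by blast
  have Vd: "V = density S (\<lambda>x. ennreal (v x))"
    using Idiv_finite_rep(3)[OF S _ Vf] Dp[OF V] unfolding v_def by blast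
  have IR: "Idiv R S = (if integrable S (\<lambda>x. xlx (r x)) then ereal (\<integral>x. xlx (r x) \<partial>S) else \<infinity>)"
    unfolding Rd by (rule Idiv_density[OF S rm]) (simp add: rn)
  have IV: "Idiv V S = (if integrable S (\<lambda>x. xlx (v x)) then ereal (\<integral>x. xlx (v x) \<partial>S) else \<infinity>)"
    unfolding Vd by (rule Idiv_density[OF S vm]) (simp add: vn)
  have ir: "integrable S (\<lambda>x. xlx (r x))" using IR Rf by (auto split: if_splits)
  have iv: "integrable S (\<lambda>x. xlx (v x))" using IV Vf by (auto split: if_splits)
  have ri: "integrable S r" using density_prob_int(1)[OF rm, of] rn Dp[OF RD] Rd by auto
  have vi: "integrable S v" using density_prob_int(1)[OF vm, of] vn Dp[OF V] Vd by auto
  define a where "a k = 1 / real (Suc (Suc k))" for k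
  have a: "0 < a k" "a k \<le> 1" for k by (auto simp: a_def)
  have a1: "a k < 1" for k by (auto simp: a_def)
  define m where "m k x = a k * v x + (1 - a k) * r x" for k x
  have mm[measurable]: "\<And>k. m k \<in> borel_measurable S" unfolding m_def by measurable
  have mn: "\<And>k x. 0 \<le> m k x"
  proof -
    fix k x
    have "0 \<le> a k * v x" using a[of k] vn[of x] by simp
    moreover have "0 \<le> (1 - a k) * r x" using a[of k] rn[of x] by simp
    ultimately show "0 \<le> m k x" unfolding m_def by simp
  qed
  have mD: "density S (\<lambda>x. ennreal (m k x)) \<in> D" for k
  proof -
    have "mix Q (a k) V R \<in> D" using cv V RD a[of k] unfolding convex_PMs_def by auto
    then show ?thesis unfolding Vd Rd m_def mix_density[OF sS vm rm vn rn a(1)[THEN less_imp_le] a(2)] .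
  qed
  have conv: "xlx (m k x) \<le> (1 - a k) * xlx (r x) + a k * xlx (v x)" for k x
  proof -
    have "m k x = (1 - a k) * r x + a k * v x" by (simp add: m_def)
    then show ?thesis using xlx_convex[OF rn[of x] vn[of x] less_imp_le[OF a(1)[of k]] a(2)[of k]] by simp
  qed
  have im: "integrable S (\<lambda>x. xlx (m k x))" for k
  proof (rule Bochner_Integration.integrable_bound)
    show "integrable S (\<lambda>x. 1 + \<bar>xlx (r x)\<bar> + \<bar>xlx (v x)\<bar>)" using ir iv by auto
    show "AE x in S. norm (xlx (m k x)) \<le> norm (1 + \<bar>xlx (r x)\<bar> + \<bar>xlx (v x)\<bar>)"
    proof (rule AE_I2)
      fix x
      have lo: "-1 \<le> xlx (m k x)" by (rule xlx_ge_m1[OF mn])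
      have "(1 - a k) * xlx (r x) \<le> (1 - a k) * \<bar>xlx (r x)\<bar>" using a[of k] by (intro mult_left_mono) auto
      moreover have "a k * xlx (v x) \<le> a k * \<bar>xlx (v x)\<bar>" using a[of k] by (intro mult_left_mono) auto
      moreover have "(1 - a k) * \<bar>xlx (r x)\<bar> \<le> \<bar>xlx (r x)\<bar>" using a[of k] by (simp add: mult_left_le_one_le)
      moreover have "a k * \<bar>xlx (v x)\<bar> \<le> \<bar>xlx (v x)\<bar>" using a[of k] by (simp add: mult_left_le_one_le)
      ultimately have "xlx (m k x) \<le> \<bar>xlx (r x)\<bar> + \<bar>xlx (v x)\<bar>" using conv[of k x] by linarith
      then show "norm (xlx (m k x)) \<le> norm (1 + \<bar>xlx (r x)\<bar> + \<bar>xlx (v x)\<bar>)" using lo by simp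
    qed
  qed simp
  have mge: "(\<integral>x. xlx (r x) \<partial>S) \<le> (\<integral>x. xlx (m k x) \<partial>S)" for k
  proof -
    have "Idiv (density S (\<lambda>x. ennreal (m k x))) S = ereal (\<integral>x. xlx (m k x) \<partial>S)"
      using Idiv_density[OF S mm mn] im by simp
    then show ?thesis using Rmin[OF mD[of k]] IR ir by simp
  qed
  define B where "B k x = (xlx (v x) - xlx (r x)) - real (Suc (Suc k)) * (xlx (m k x) - xlx (r x))" for k x
  have Bm[measurable]: "\<And>k. B k \<in> borel_measurable S" unfolding B_def by measurable
  have Bn: "0 \<le> B k x" for k x
  proof -
    have "xlx (m k x) - xlx (r x) \<le> a k * (xlx (v x) - xlx (r x))" using conv[of k x] by (simp add: algebra_simps)
    then have "real (Suc (Suc k)) * (xlx (m k x) - xlx (r x)) \<le> real (Suc (Suc k)) * (a k * (xlx (v x) - xlx (r x)))"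
      by (intro mult_left_mono) auto
    also have "\<dots> = xlx (v x) - xlx (r x)" by (simp add: a_def)
    finally show ?thesis by (simp add: B_def)
  qed
  define K where "K = (\<integral>x. xlx (v x) \<partial>S) - (\<integral>x. xlx (r x) \<partial>S)"
  have iB: "integrable S (B k)" for k unfolding B_def using ir iv im by auto
  have intB: "(\<integral>\<^sup>+x. ennreal (B k x) \<partial>S) \<le> ennreal K" for k
  proof -
    have "(\<integral>x. B k x \<partial>S) = K - real (Suc (Suc k)) * ((\<integral>x. xlx (m k x) \<partial>S) - (\<integral>x. xlx (r x) \<partial>S))"
      unfolding B_def K_def using ir iv im[of k] by simp
    also have "\<dots> \<le> K" using mge[of k] by simp
    finally have "(\<integral>x. B k x \<partial>S) \<le> K" .
    moreover have "(\<integral>\<^sup>+x. ennreal (B k x) \<partial>S) = ennreal (\<integral>x. B k x \<partial>S)"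
      using iB Bn by (intro nn_integral_eq_integral) auto
    ultimately show ?thesis by (simp add: ennreal_leI)
  qed
  define Bf where "Bf x = (if 0 < r x then ennreal (v x * ln (v x) - v x * ln (r x) - v x + r x)
      else if 0 < v x then \<infinity> else 0)" for x
  have Bfm[measurable]: "Bf \<in> borel_measurable S" unfolding Bf_def by measurable
  have Bfle: "Bf x \<le> liminf (\<lambda>k. ennreal (B k x))" for x
  proof (cases "0 < r x")
    case rp: True
    define L where "L k = xlx (v x) - xlx (r x) - (ln (m k x) + 1) * (v x - r x)" for k
    have mp: "0 < m k x" for k
    proof -
      have "0 < (1 - a k) * r x"
        using a1[of k] rp by (auto intro: mult_pos_pos)
      then show ?thesis unfolding m_def using a[of k] vn[of x] rn[of x] rp
        by (auto intro: add_nonneg_pos add_pos_nonneg mult_nonneg_nonneg)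
    qed
    have LB: "L k \<le> B k x" for k
    proof -
      have br: "xlx (m k x) + (ln (m k x) + 1) * (r x - m k x) \<le> xlx (r x)" by (rule bregman_nonneg[OF mp rn])
      have e1: "(ln (m k x) + 1) * (r x - m k x) = - ((ln (m k x) + 1) * (m k x - r x))" by (simp add: algebra_simps)
      have e2: "m k x - r x = a k * (v x - r x)" by (simp add: m_def algebra_simps)
      have "xlx (m k x) - xlx (r x) \<le> (ln (m k x) + 1) * (m k x - r x)" using br e1 by linarith
      also have "\<dots> = a k * ((ln (m k x) + 1) * (v x - r x))" unfolding e2 by (simp add: algebra_simps)
      finally have "xlx (m k x) - xlx (r x) \<le> a k * ((ln (m k x) + 1) * (v x - r x))" .
      then have "real (Suc (Suc k)) * (xlx (m k x) - xlx (r x)) \<le> real (Suc (Suc k)) * (a k * ((ln (m k x) + 1) * (v x - r x)))"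
        by (intro mult_left_mono) auto
      also have "\<dots> = (ln (m k x) + 1) * (v x - r x)" by (simp add: a_def)
      finally show ?thesis by (simp add: B_def L_def)
    qed
    have "(\<lambda>k. a k) \<longlonglongrightarrow> 0" unfolding a_def
      using LIMSEQ_Suc[OF LIMSEQ_inverse_real_of_nat] by (simp add: inverse_eq_divide)
    then have "(\<lambda>k. m k x) \<longlonglongrightarrow> 0 * v x + (1 - 0) * r x" unfolding m_def
      by (intro tendsto_intros)
    then have "(\<lambda>k. m k x) \<longlonglongrightarrow> r x" by simp
    then have "(\<lambda>k. L k) \<longlonglongrightarrow> xlx (v x) - xlx (r x) - (ln (r x) + 1) * (v x - r x)"
      unfolding L_def using rp by (intro tendsto_intros) auto
    moreover have "xlx (v x) - xlx (r x) - (ln (r x) + 1) * (v x - r x) = v x * ln (v x) - v x * ln (r x) - v x + r x"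
      by (simp add: xlx_def algebra_simps)
    ultimately have "(\<lambda>k. ennreal (L k)) \<longlonglongrightarrow> ennreal (v x * ln (v x) - v x * ln (r x) - v x + r x)"
      by (intro tendsto_ennrealI) simp
    then have "liminf (\<lambda>k. ennreal (L k)) = ennreal (v x * ln (v x) - v x * ln (r x) - v x + r x)"
      by (intro lim_imp_Liminf) auto
    moreover have "liminf (\<lambda>k. ennreal (L k)) \<le> liminf (\<lambda>k. ennreal (B k x))"
      using LB by (intro Liminf_mono always_eventually allI ennreal_leI) auto
    ultimately show ?thesis using rp by (simp add: Bf_def)
  next
    case rz: False
    then have r0: "r x = 0" using rn[of x] by simp
    show ?thesis
    proof (cases "0 < v x")
      case vp: True
      have Bk: "B k x = v x * ln (real (Suc (Suc k)))" for k
      proof -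
        have "m k x = a k * v x" by (simp add: m_def r0)
        then have "xlx (m k x) = a k * v x * (ln (a k) + ln (v x))"
          using a[of k] vp by (simp add: xlx_def ln_mult)
        moreover have "ln (a k) = - ln (real (Suc (Suc k)))" by (simp add: a_def ln_div)
        ultimately show ?thesis by (simp add: B_def xlx_def r0 a_def field_simps)
      qed
      have "filterlim (\<lambda>k. v x * ln (real (Suc (Suc k)))) at_top sequentially"
        by (rule filterlim_tendsto_pos_mult_at_top[OF tendsto_const vp ln_Suc_at_top])
      then have "(\<lambda>k. ennreal (B k x)) \<longlonglongrightarrow> top" unfolding Bk by (simp add: ennreal_tendsto_top_eq_at_top)
      then have "liminf (\<lambda>k. ennreal (B k x)) = top" by (intro lim_imp_Liminf) auto
      then show ?thesis by simp
    next
      case False then show ?thesis using rz by (simp add: Bf_def)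
    qed
  qed
  have "(\<integral>\<^sup>+x. Bf x \<partial>S) \<le> (\<integral>\<^sup>+x. liminf (\<lambda>k. ennreal (B k x)) \<partial>S)"
    by (intro nn_integral_mono Bfle)
  also have "\<dots> \<le> liminf (\<lambda>k. \<integral>\<^sup>+x. ennreal (B k x) \<partial>S)"
    by (rule nn_integral_liminf) simp
  also have "\<dots> \<le> liminf (\<lambda>k. ennreal K)"
    using intB by (intro Liminf_mono always_eventually allI) auto
  also have "\<dots> = ennreal K" by (simp add: Liminf_const)
  finally have BfK: "(\<integral>\<^sup>+x. Bf x \<partial>S) \<le> ennreal K" .
  then have "(\<integral>\<^sup>+x. Bf x \<partial>S) \<noteq> \<infinity>" by (auto simp: top_unique)
  then have "AE x in S. Bf x \<noteq> \<infinity>" by (intro nn_integral_noteq_infinite) auto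
  then have AEvr: "AE x in S. r x = 0 \<longrightarrow> v x = 0"
  proof eventually_elim
    case (elim x)
    show ?case
    proof (rule impI, rule ccontr)
      assume r0: "r x = 0" and "v x \<noteq> 0"
      then have "0 < v x" using vn[of x] by simp
      then have "Bf x = \<infinity>" by (simp add: Bf_def r0)
      with elim show False by simp
    qed
  qed
  define Br where "Br x = (if 0 < r x then v x * ln (v x) - v x * ln (r x) - v x + r x else 0)" for x
  have Brm[measurable]: "Br \<in> borel_measurable S" unfolding Br_def by measurable
  have Brn: "0 \<le> Br x" for x
  proof (cases "0 < r x")
    case True
    have "xlx (r x) + (ln (r x) + 1) * (v x - r x) \<le> xlx (v x)" by (rule bregman_nonneg[OF True vn])
    then show ?thesis using True by (simp add: Br_def xlx_def algebra_simps)
  qed (simp add: Br_def)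
  have "(\<integral>\<^sup>+x. ennreal (Br x) \<partial>S) \<le> (\<integral>\<^sup>+x. Bf x \<partial>S)"
    by (intro nn_integral_mono) (auto simp: Br_def Bf_def)
  also have "\<dots> \<le> ennreal K" by (rule BfK)
  also have "\<dots> < \<infinity>" by simp
  finally have "(\<integral>\<^sup>+x. ennreal (Br x) \<partial>S) < \<infinity>" .
  then have iBr: "integrable S Br" using Brn by (intro integrableI_nonneg) auto
  define w where "w x = (if 0 < r x then v x / r x else 0)" for x
  have wm[measurable]: "w \<in> borel_measurable S" unfolding w_def by measurable
  have wn: "\<And>x. 0 \<le> w x" unfolding w_def using rn vn by simp
  have sR: "sets R = sets S" using Rd by simp
  have wmR[measurable]: "w \<in> borel_measurable R" unfolding measurable_cong_sets[OF sR refl] by (rule wm)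
  have VR: "V = density R (\<lambda>x. ennreal (w x))"
  proof -
    have "density R (\<lambda>x. ennreal (w x)) = density S (\<lambda>x. ennreal (r x) * ennreal (w x))"
      unfolding Rd by (rule density_density_eq) auto
    also have "\<dots> = density S (\<lambda>x. ennreal (v x))"
    proof (rule density_cong)
      show "AE x in S. ennreal (r x) * ennreal (w x) = ennreal (v x)"
        using AEvr
      proof eventually_elim
        case (elim x)
        show ?case
        proof (cases "0 < r x")
          case True
          then have "r x * w x = v x" by (simp add: w_def)
          then show ?thesis using ennreal_mult_left_nn[OF rn[of x], of "w x"] by simp
        next
          case False
          then have "r x = 0" using rn[of x] by simp
          with elim have "v x = 0" by simp
          then show ?thesis using False by (simp add: w_def)
        qed
      qed
    qed auto
    finally show ?thesis using Vd by simp
  qed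
  have Rfin: "finite_measure R"
  proof -
    interpret Rp: prob_space R using Dp[OF RD] by simp
    show ?thesis by (rule Rp.finite_measure_axioms)
  qed
  have "Idiv V R < \<infinity> \<longleftrightarrow> integrable R (\<lambda>x. xlx (w x))"
    unfolding VR by (rule Idiv_density_fin_iff[OF Rfin wmR]) (simp add: wn)
  moreover have "integrable R (\<lambda>x. xlx (w x)) \<longleftrightarrow> integrable S (\<lambda>x. r x * xlx (w x))"
    unfolding Rd by (subst integrable_density) (auto simp: rn)
  moreover have "integrable S (\<lambda>x. r x * xlx (w x))"
  proof -
    have eq: "r x * xlx (w x) = Br x + (if 0 < r x then v x - r x else 0)" for x
    proof (cases "0 < r x")
      case True
      show ?thesis
      proof (cases "v x = 0")
        case False
        then have vp: "0 < v x" using vn[of x] by simp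
        have rv: "r x * (v x / r x) = v x" using True by simp
        have "r x * xlx (w x) = (r x * (v x / r x)) * ln (v x / r x)"
          using True by (simp add: w_def xlx_def mult.assoc)
        also have "\<dots> = v x * ln (v x) - v x * ln (r x)" unfolding rv
          using True vp by (simp add: ln_div algebra_simps)
        finally show ?thesis using True by (simp add: Br_def)
      qed (use True in \<open>simp add: Br_def w_def\<close>)
    qed (simp add: Br_def w_def)
    have ih: "integrable S (\<lambda>x. if 0 < r x then v x - r x else 0)"
    proof (rule Bochner_Integration.integrable_bound)
      show "integrable S (\<lambda>x. \<bar>v x\<bar> + \<bar>r x\<bar>)" using vi ri by auto
      show "AE x in S. norm (if 0 < r x then v x - r x else 0) \<le> norm (\<bar>v x\<bar> + \<bar>r x\<bar>)"
        by (rule AE_I2) auto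
    qed simp
    have "integrable S (\<lambda>x. Br x + (if 0 < r x then v x - r x else 0))"
      using iBr ih by (rule Bochner_Integration.integrable_add)
    then show ?thesis unfolding eq .
  qed
  ultimately show ?thesis by simp
qed

lemma AE_fin_density:
  assumes Q: "sigma_finite_measure Q" and mu[measurable]: "mu \<in> borel_measurable Q"
    and X: "finite_measure (density Q mu)"
  shows "AE x in Q. mu x \<noteq> \<infinity>"
proof -
  interpret sigma_finite_measure Q by fact
  have "sigma_finite_measure (density Q mu)"
    using X by (simp add: finite_measure.sigma_finite_measure)
  then show ?thesis using sigma_finite_iff_density_finite[OF mu] by simp
qed

lemma Idiv_via_Q:
  fixes Q :: "'a measure" and v :: "'a \<Rightarrow> real" and mu :: "'a \<Rightarrow> ennreal"
  assumes Q: "sigma_finite_measure Q"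
    and vm[measurable]: "v \<in> borel_measurable Q" and vn: "\<And>x. 0 \<le> v x"
    and Vp: "prob_space (density Q (\<lambda>x. ennreal (v x)))"
    and mum[measurable]: "mu \<in> borel_measurable Q" and Xf: "finite_measure (density Q mu)"
  shows "Idiv (density Q (\<lambda>x. ennreal (v x))) (density Q mu) < \<infinity> \<longleftrightarrow>
     (AE x in density Q (\<lambda>x. ennreal (v x)). 0 < mu x) \<and>
     integrable (density Q (\<lambda>x. ennreal (v x))) (\<lambda>x. ln (v x) - ln (enn2real (mu x)))"
proof -
  interpret sigma_finite_measure Q by fact
  let ?V = "density Q (\<lambda>x. ennreal (v x))"
  let ?X = "density Q mu"
  have fin: "AE x in Q. mu x \<noteq> \<infinity>" by (rule AE_fin_density[OF Q mum Xf])
  have QV: "\<And>P. (AE x in Q. P x) \<Longrightarrow> (AE x in ?V. P x)"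
    by (subst AE_density) (auto elim: AE_mp)
  have vpos: "AE x in ?V. 0 < v x" by (subst AE_density) auto
  have finV: "AE x in ?V. mu x \<noteq> \<infinity>" by (rule QV[OF fin])
  have sX: "sets ?X = sets Q" by simp
  show ?thesis
  proof
    assume I: "Idiv ?V ?X < \<infinity>"
    define w where "w x = enn2real (RN_deriv ?X ?V x)" for x
    have wm[measurable]: "w \<in> borel_measurable Q" unfolding w_def
      using borel_measurable_RN_deriv[of ?X ?V] measurable_cong_sets[OF sX refl] by simp
    have wmX: "w \<in> borel_measurable ?X" using wm measurable_cong_sets[OF sX refl] by simp
    have wn: "\<And>x. 0 \<le> w x" unfolding w_def by simp
    have VX: "?V = density ?X (\<lambda>x. ennreal (w x))"
      using Idiv_finite_rep(3)[OF Xf Vp I] unfolding w_def .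
    have "integrable ?X (\<lambda>x. xlx (w x))"
      using I unfolding VX by (subst (asm) Idiv_density_fin_iff[OF Xf wmX]) (auto simp: wn)
    then have iw: "integrable ?V (\<lambda>x. ln (w x))"
      unfolding VX by (subst (asm) xlx_integrable_iff_ln[OF wmX]) (auto simp: wn)
    have "density Q (\<lambda>x. ennreal (v x)) = density Q (\<lambda>x. mu x * ennreal (w x))"
      using VX by (simp add: density_density_eq)
    then have ae: "AE x in Q. ennreal (v x) = mu x * ennreal (w x)"
      by (subst (asm) density_unique_iff) auto
    have ae2: "AE x in ?V. 0 < mu x \<and> ln (w x) = ln (v x) - ln (enn2real (mu x))"
      using QV[OF ae] QV[OF fin] vpos
    proof eventually_elim
      case (elim x)
      from elim(2) obtain m where m: "0 \<le> m" "mu x = ennreal m" by (cases "mu x") auto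
      have eq: "v x = m * w x" using elim(1) m wn[of x] vn[of x]
        by (simp add: ennreal_mult_left_nn[OF m(1)])
      have "m \<noteq> 0" using eq elim(3) by auto
      then have mp: "0 < m" using m by simp
      have wp: "0 < w x" using eq elim(3) mp wn[of x] by (simp add: zero_less_mult_iff)
      have "w x = v x / m" using eq mp by simp
      then have "ln (w x) = ln (v x) - ln m" using elim(3) mp by (simp add: ln_div)
      then show ?case using m mp by simp
    qed
    have "integrable ?V (\<lambda>x. ln (v x) - ln (enn2real (mu x)))"
      using iw by (rule integrable_cong_AE_imp) (use ae2 in \<open>auto elim: AE_mp\<close>)
    moreover have "AE x in ?V. 0 < mu x" using ae2 by (auto elim: AE_mp)
    ultimately show "(AE x in ?V. 0 < mu x) \<and> integrable ?V (\<lambda>x. ln (v x) - ln (enn2real (mu x)))" by simp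
  next
    assume H: "(AE x in ?V. 0 < mu x) \<and> integrable ?V (\<lambda>x. ln (v x) - ln (enn2real (mu x)))"
    have posQ: "AE x in Q. 0 < v x \<longrightarrow> 0 < mu x" using H by (subst (asm) AE_density) auto
    define w where "w x = (if 0 < mu x \<and> mu x < \<infinity> then v x / enn2real (mu x) else 0)" for x
    have wm[measurable]: "w \<in> borel_measurable Q" unfolding w_def by measurable
    have wmX: "w \<in> borel_measurable ?X" using wm measurable_cong_sets[OF sX refl] by simp
    have wn: "\<And>x. 0 \<le> w x" unfolding w_def using vn by simp
    have VX: "?V = density ?X (\<lambda>x. ennreal (w x))"
    proof -
      have "density ?X (\<lambda>x. ennreal (w x)) = density Q (\<lambda>x. mu x * ennreal (w x))"
        by (simp add: density_density_eq)
      also have "\<dots> = ?V"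
      proof (rule density_cong)
        show "AE x in Q. mu x * ennreal (w x) = ennreal (v x)"
          using fin posQ
        proof eventually_elim
          case (elim x)
          show ?case
          proof (cases "0 < mu x")
            case True
            from elim(1) obtain m where m: "0 \<le> m" "mu x = ennreal m" by (cases "mu x") auto
            with True have mp: "0 < m" by simp
            have "w x = v x / m" using True m by (simp add: w_def)
            then show ?thesis using m mp by (simp add: ennreal_mult_left_nn)
          next
            case False
            then have "\<not> 0 < v x" using elim(2) by auto
            then have "v x = 0" using vn[of x] by simp
            then show ?thesis using False by (simp add: w_def)
          qed
        qed
      qed auto
      finally show ?thesis by simp
    qed
    have ae2: "AE x in ?V. ln (w x) = ln (v x) - ln (enn2real (mu x))"
      using finV vpos conjunct1[OF H]
    proof eventually_elim
      case (elim x)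
      from elim(1) obtain m where m: "0 \<le> m" "mu x = ennreal m" by (cases "mu x") auto
      with elim have mp: "0 < m" by simp
      have "w x = v x / m" using m mp by (simp add: w_def)
      then show ?case using m mp elim(2) by (simp add: ln_div)
    qed
    have "integrable ?V (\<lambda>x. ln (w x))"
      using conjunct2[OF H] by (rule integrable_cong_AE_imp) (use ae2 in \<open>auto elim: AE_mp\<close>)
    then have "integrable ?X (\<lambda>x. xlx (w x))"
      unfolding VX by (subst xlx_integrable_iff_ln[OF wmX]) (auto simp: wn)
    then show "Idiv ?V ?X < \<infinity>"
      unfolding VX by (subst Idiv_density_fin_iff[OF Xf wmX]) (auto simp: wn)
  qed
qed

lemma step_fin:
  fixes Q :: "'a measure" and v :: "'a \<Rightarrow> real" and \<alpha> \<sigma> \<beta> :: "'a \<Rightarrow> ennreal"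
  assumes Q: "prob_space Q"
    and vm[measurable]: "v \<in> borel_measurable Q" and vn: "\<And>x. 0 \<le> v x"
    and Vp: "prob_space (density Q (\<lambda>x. ennreal (v x)))"
    and am[measurable]: "\<alpha> \<in> borel_measurable Q" and Pp: "prob_space (density Q \<alpha>)"
    and IP: "Idiv (density Q (\<lambda>x. ennreal (v x))) (density Q \<alpha>) < \<infinity>"
    and sm[measurable]: "\<sigma> \<in> borel_measurable Q" and Sof: "finite_measure (density Q \<sigma>)"
    and IS: "Idiv (density Q (\<lambda>x. ennreal (v x))) (density Q \<sigma>) < \<infinity>"
    and bm[measurable]: "\<beta> \<in> borel_measurable Q" and Po: "prob_space (density Q (\<lambda>x. \<sigma> x * \<beta> x))"
    and IPo: "Idiv (density Q (\<lambda>x. ennreal (v x))) (density Q (\<lambda>x. \<sigma> x * \<beta> x)) < \<infinity>"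
    and S'f: "finite_measure (density Q (\<lambda>x. \<alpha> x * inverse (\<beta> x)))"
  shows "Idiv (density Q (\<lambda>x. ennreal (v x))) (density Q (\<lambda>x. \<alpha> x * inverse (\<beta> x))) < \<infinity>"
proof -
  interpret prob_space Q by fact
  have sf: "sigma_finite_measure Q" by (rule sigma_finite_measure_axioms)
  let ?V = "density Q (\<lambda>x. ennreal (v x))"
  have Ppf: "finite_measure (density Q \<alpha>)" using Pp by (simp add: prob_space_def)
  have Pof: "finite_measure (density Q (\<lambda>x. \<sigma> x * \<beta> x))" using Po by (simp add: prob_space_def)
  have A1: "(AE x in ?V. 0 < \<alpha> x) \<and> integrable ?V (\<lambda>x. ln (v x) - ln (enn2real (\<alpha> x)))"
    using Idiv_via_Q[OF sf vm vn Vp am Ppf] IP by simp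
  have A2: "(AE x in ?V. 0 < \<sigma> x) \<and> integrable ?V (\<lambda>x. ln (v x) - ln (enn2real (\<sigma> x)))"
    using Idiv_via_Q[OF sf vm vn Vp sm Sof] IS by simp
  have A3: "(AE x in ?V. 0 < \<sigma> x * \<beta> x) \<and> integrable ?V (\<lambda>x. ln (v x) - ln (enn2real (\<sigma> x * \<beta> x)))"
    using Idiv_via_Q[OF sf vm vn Vp _ Pof] IPo by simp
  have QV: "\<And>P. (AE x in Q. P x) \<Longrightarrow> (AE x in ?V. P x)"
    by (subst AE_density) (auto elim: AE_mp)
  have f1: "AE x in ?V. \<alpha> x \<noteq> \<infinity>" by (rule QV[OF AE_fin_density[OF sf am Ppf]])
  have f2: "AE x in ?V. \<sigma> x \<noteq> \<infinity>" by (rule QV[OF AE_fin_density[OF sf sm Sof]])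
  have f3: "AE x in ?V. \<sigma> x * \<beta> x \<noteq> \<infinity>" by (rule QV[OF AE_fin_density[OF sf _ Pof]]) simp
  have vpos: "AE x in ?V. 0 < v x" by (subst AE_density) auto
  have ae: "AE x in ?V. 0 < \<alpha> x * inverse (\<beta> x) \<and>
     ln (v x) - ln (enn2real (\<alpha> x * inverse (\<beta> x))) =
     (ln (v x) - ln (enn2real (\<alpha> x))) + (ln (v x) - ln (enn2real (\<sigma> x))) - (ln (v x) - ln (enn2real (\<sigma> x * \<beta> x)))"
    using conjunct1[OF A1] conjunct1[OF A2] conjunct1[OF A3] f1 f2 f3
  proof eventually_elim
    case (elim x)
    from elim(4) obtain a where a: "0 \<le> a" "\<alpha> x = ennreal a" by (cases "\<alpha> x") auto
    from elim(5) obtain s where s: "0 \<le> s" "\<sigma> x = ennreal s" by (cases "\<sigma> x") auto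
    have ap: "0 < a" using elim(1) a by simp
    have sp: "0 < s" using elim(2) s by simp
    have "\<beta> x \<noteq> \<infinity>"
    proof
      assume "\<beta> x = \<infinity>"
      then have "\<sigma> x * \<beta> x = \<infinity>" using elim(2) by (simp add: ennreal_mult_eq_top_iff)
      with elim(6) show False by simp
    qed
    then obtain b where b: "0 \<le> b" "\<beta> x = ennreal b" by (cases "\<beta> x") auto
    have "0 < \<sigma> x * \<beta> x" by (rule elim(3))
    then have "0 < s * b" using b s by (auto simp: ennreal_mult_left_nn)
    then have bp: "0 < b" using b s by (simp add: zero_less_mult_iff)
    have e1: "\<alpha> x * inverse (\<beta> x) = ennreal (a / b)"
      using a b bp by (simp add: inverse_ennreal ennreal_mult_left_nn divide_inverse)
    have e2: "\<sigma> x * \<beta> x = ennreal (s * b)" using s b by (simp add: ennreal_mult_left_nn)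
    have "0 < a / b" using ap bp by simp
    moreover have "ln (a / b) = ln a - ln b" using ap bp by (simp add: ln_div)
    moreover have "ln (s * b) = ln s + ln b" using sp bp by (simp add: ln_mult)
    ultimately show ?case using a s e1 e2 ap bp sp by simp
  qed
  have "integrable ?V (\<lambda>x. (ln (v x) - ln (enn2real (\<alpha> x))) + (ln (v x) - ln (enn2real (\<sigma> x))) - (ln (v x) - ln (enn2real (\<sigma> x * \<beta> x))))"
    by (rule Bochner_Integration.integrable_diff[OF Bochner_Integration.integrable_add[OF conjunct2[OF A1] conjunct2[OF A2]] conjunct2[OF A3]])
  then have "integrable ?V (\<lambda>x. ln (v x) - ln (enn2real (\<alpha> x * inverse (\<beta> x))))"
    by (rule integrable_cong_AE_imp) (use ae in \<open>auto elim: AE_mp\<close>)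
  moreover have "AE x in ?V. 0 < \<alpha> x * inverse (\<beta> x)" using ae by (auto elim: AE_mp)
  ultimately show ?thesis
    using Idiv_via_Q[OF sf vm vn Vp _ S'f] by simp
qed

definition Inv :: "'a measure \<Rightarrow> 'a measure \<Rightarrow> 'a measure \<Rightarrow> 'a measure \<Rightarrow> bool" where
  "Inv Q V S P \<longleftrightarrow> (\<exists>\<sigma>. \<sigma> \<in> borel_measurable Q \<and> S = density Q \<sigma>) \<and> finite_measure S \<and>
     prob_space P \<and> sets P = sets Q \<and> P = density Q (RN_deriv Q P) \<and> P = density S (RN_deriv S P) \<and>
     Idiv V S < \<infinity> \<and> Idiv V P < \<infinity>"

lemma Inv_base:
  assumes Q: "prob_space Q" and IVQ: "Idiv V Q < \<infinity>"
  shows "Inv Q V Q Q"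
proof -
  interpret prob_space Q by fact
  have ac: "absolutely_continuous Q Q" by (simp add: absolutely_continuous_def)
  have "Q = density Q (RN_deriv Q Q)" using density_RN_deriv[OF ac refl] by simp
  moreover have "Q = density Q (\<lambda>_. 1)" by (simp add: density_1)
  moreover have "finite_measure Q" by (rule finite_measure_axioms)
  ultimately show ?thesis unfolding Inv_def using Q IVQ
    by (metis borel_measurable_const)
qed

lemma Inv_step:
  fixes Q V So Po Sp Pp S' :: "'a measure" and D :: "'a measure set"
  assumes Q: "prob_space Q" and Vp: "prob_space V" and IVQ: "Idiv V Q < \<infinity>"
    and Io: "Inv Q V So Po" and Ip: "Inv Q V Sp Pp"
    and S'def: "S' = density Q (\<lambda>x. RN_deriv Q Pp x * inverse (RN_deriv So Po x))"
    and fin: "emeasure S' (space Q) < \<infinity>"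
    and D: "D \<subseteq> PMs Q" and vc: "variation_closed Q D" and cv: "convex_PMs Q D" and VD: "V \<in> D"
  shows "Inv Q V S' (Iproj S' D) \<and> is_Iproj S' D (Iproj S' D)"
proof -
  interpret Qp: prob_space Q by fact
  have Qf: "finite_measure Q" by (rule Qp.finite_measure_axioms)
  have sf: "sigma_finite_measure Q" by (rule Qp.sigma_finite_measure_axioms)
  define v where "v x = enn2real (RN_deriv Q V x)" for x
  have vm[measurable]: "v \<in> borel_measurable Q" unfolding v_def by measurable
  have vn: "\<And>x. 0 \<le> v x" unfolding v_def by simp
  have Vd: "V = density Q (\<lambda>x. ennreal (v x))"
    using Idiv_finite_rep(3)[OF Qf Vp IVQ] unfolding v_def .
  from Io obtain \<sigma> where sm[measurable]: "\<sigma> \<in> borel_measurable Q" and Sod: "So = density Q \<sigma>"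
    and Sof: "finite_measure So" and Pop: "prob_space Po" and Pos: "sets Po = sets Q"
    and PoS: "Po = density So (RN_deriv So Po)"
    and IS: "Idiv V So < \<infinity>" and IPo: "Idiv V Po < \<infinity>"
    unfolding Inv_def by blast
  from Ip have Ppp: "prob_space Pp" and PpQ: "Pp = density Q (RN_deriv Q Pp)" and IP: "Idiv V Pp < \<infinity>"
    unfolding Inv_def by blast+
  define \<alpha> where "\<alpha> = RN_deriv Q Pp"
  define \<beta> where "\<beta> = RN_deriv So Po"
  have am[measurable]: "\<alpha> \<in> borel_measurable Q" unfolding \<alpha>_def by simp
  have sSo: "sets So = sets Q" using Sod by simp
  have bm[measurable]: "\<beta> \<in> borel_measurable Q"
    unfolding \<beta>_def using borel_measurable_RN_deriv[of So Po] unfolding measurable_cong_sets[OF sSo refl] .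
  have Pod: "Po = density Q (\<lambda>x. \<sigma> x * \<beta> x)"
  proof -
    have "Po = density So \<beta>" using PoS by (simp add: \<beta>_def)
    also have "\<dots> = density (density Q \<sigma>) \<beta>" by (simp add: Sod)
    also have "\<dots> = density Q (\<lambda>x. \<sigma> x * \<beta> x)" by (rule density_density_eq) simp_all
    finally show ?thesis .
  qed
  have sS': "sets S' = sets Q" and spS': "space S' = space Q" using S'def by simp_all
  have S'f: "finite_measure S'" using fin spS' by (intro finite_measureI) simp
  have S'd: "S' = density Q (\<lambda>x. \<alpha> x * inverse (\<beta> x))" unfolding S'def \<alpha>_def \<beta>_def ..
  have IVS': "Idiv V S' < \<infinity>"
    unfolding S'd Vd
  proof (rule step_fin[OF Q vm vn _ am _ _ sm _ _ bm])
    show "prob_space (density Q (\<lambda>x. ennreal (v x)))" using Vp Vd by simp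
    show "prob_space (density Q \<alpha>)" using Ppp PpQ by (simp add: \<alpha>_def)
    show "Idiv (density Q (\<lambda>x. ennreal (v x))) (density Q \<alpha>) < \<infinity>" using IP PpQ Vd by (simp add: \<alpha>_def)
    show "finite_measure (density Q \<sigma>)" using Sof Sod by simp
    show "Idiv (density Q (\<lambda>x. ennreal (v x))) (density Q \<sigma>) < \<infinity>" using IS Sod Vd by simp
    show "prob_space (density Q (\<lambda>x. \<sigma> x * \<beta> x))" using Pop Pod by simp
    show "Idiv (density Q (\<lambda>x. ennreal (v x))) (density Q (\<lambda>x. \<sigma> x * \<beta> x)) < \<infinity>" using IPo Pod Vd by simp
    show "finite_measure (density Q (\<lambda>x. \<alpha> x * inverse (\<beta> x)))" using S'f S'd by simp
  qed
  have "\<exists>R. is_Iproj S' D R"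
    by (rule Iproj_exists[OF S'f sS' D vc cv]) (use VD IVS' in blast)
  then have isI: "is_Iproj S' D (Iproj S' D)" unfolding Iproj_def by (rule someI_ex)
  define P' where "P' = Iproj S' D"
  have P'D: "P' \<in> D" using isI unfolding is_Iproj_def P'_def by simp
  have P'p: "prob_space P'" and sP': "sets P' = sets Q" using D P'D by (auto simp: PMs_def)
  have IP'S': "Idiv P' S' < \<infinity>" using isI unfolding is_Iproj_def P'_def by blast
  have IVP': "Idiv V P' < \<infinity>" unfolding P'_def by (rule Iproj_V_fin[OF S'f sS' D cv isI VD IVS'])
  have acS': "absolutely_continuous S' P'" using Idiv_finite_rep(2)[OF S'f P'p IP'S'] .
  have P'S': "P' = density S' (RN_deriv S' P')"
  proof -
    interpret S': finite_measure S' by (rule S'f)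
    show ?thesis using S'.density_RN_deriv[OF acS'] sP' sS' by simp
  qed
  have acQS: "absolutely_continuous Q S'" unfolding S'd by (rule absolutely_continuousI_density) measurable
  have acQ: "absolutely_continuous Q P'"
    using acQS acS' unfolding absolutely_continuous_def by blast
  have P'Q: "P' = density Q (RN_deriv Q P')"
    using Qp.density_RN_deriv[OF acQ sP'] by simp
  have "Inv Q V S' P'"
    unfolding Inv_def
    using S'd am bm S'f P'p sP' P'Q P'S' IVS' IVP' by (auto intro!: exI[of _ "\<lambda>x. \<alpha> x * inverse (\<beta> x)"])
  then show ?thesis using isI unfolding P'_def by simp
qed

lemma alg_eqs:
  "algS Q C t 0 i = Q" "algP Q C t 0 i = Q"
  "algS Q C t (Suc m) (Suc 0) = density Q (\<lambda>x. RN_deriv Q (algP Q C t m t) x *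
      inverse (RN_deriv (algS Q C t m (Suc 0)) (algP Q C t m (Suc 0)) x))"
  "algP Q C t (Suc m) (Suc 0) = Iproj (algS Q C t (Suc m) (Suc 0)) (C (Suc 0))"
  "algS Q C t (Suc m) (Suc (Suc j)) = density Q (\<lambda>x. RN_deriv Q (algP Q C t (Suc m) (Suc j)) x *
      inverse (RN_deriv (algS Q C t m (Suc (Suc j))) (algP Q C t m (Suc (Suc j))) x))"
  "algP Q C t (Suc m) (Suc (Suc j)) = Iproj (algS Q C t (Suc m) (Suc (Suc j))) (C (Suc (Suc j)))"
  by (simp_all add: algS_def algP_def Let_def)

lemma main_ind:
  fixes Q V :: "'a measure" and C :: "nat \<Rightarrow> 'a measure set" and t :: nat
  assumes Q: "prob_space Q" and t: "t \<ge> 1"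
    and Cp: "\<forall>i\<in>{1..t}. C i \<subseteq> PMs Q \<and> variation_closed Q (C i) \<and> convex_PMs Q (C i)"
    and fin: "\<And>n i. i \<in> {1..t} \<Longrightarrow> emeasure (algS Q C t n i) (space Q) < \<infinity>"
    and VC: "\<forall>i\<in>{1..t}. V \<in> C i" and IVQ: "Idiv V Q < \<infinity>"
  shows "\<forall>i\<in>{1..t}. Inv Q V (algS Q C t n i) (algP Q C t n i) \<and>
           (0 < n \<longrightarrow> is_Iproj (algS Q C t n i) (C i) (algP Q C t n i))"
proof (induction n)
  case 0
  show ?case using Inv_base[OF Q IVQ] by (simp add: alg_eqs)
next
  case (Suc m)
  have Vp: "prob_space V"
  proof -
    have i1: "1 \<in> {1..t}" using t by simp
    then have "V \<in> C 1" "C 1 \<subseteq> PMs Q" using VC Cp by blast+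
    then show ?thesis by (auto simp: PMs_def)
  qed
  have step: "Inv Q V (algS Q C t (Suc m) (Suc j)) (algP Q C t (Suc m) (Suc j)) \<and>
      is_Iproj (algS Q C t (Suc m) (Suc j)) (C (Suc j)) (algP Q C t (Suc m) (Suc j))"
    if "Suc j \<le> t" for j
    using that
  proof (induction j)
    case 0
    have i1: "Suc 0 \<in> {1..t}" using t by simp
    have it: "t \<in> {1..t}" using t by simp
    show ?case
      unfolding alg_eqs(4)
    proof (rule Inv_step[OF Q Vp IVQ _ _ alg_eqs(3)])
      show "Inv Q V (algS Q C t m (Suc 0)) (algP Q C t m (Suc 0))" using Suc.IH i1 by blast
      show "Inv Q V (algS Q C t m t) (algP Q C t m t)" using Suc.IH it by blast
      show "emeasure (algS Q C t (Suc m) (Suc 0)) (space Q) < \<infinity>" using fin i1 by blast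
      show "C (Suc 0) \<subseteq> PMs Q" "variation_closed Q (C (Suc 0))" "convex_PMs Q (C (Suc 0))"
        using Cp i1 by blast+
      show "V \<in> C (Suc 0)" using VC i1 by blast
    qed
  next
    case (Suc j)
    have ij: "Suc (Suc j) \<in> {1..t}" using Suc.prems by simp
    have IHj: "Inv Q V (algS Q C t (Suc m) (Suc j)) (algP Q C t (Suc m) (Suc j))"
      using Suc.IH Suc.prems by simp
    show ?case
      unfolding alg_eqs(6)
    proof (rule Inv_step[OF Q Vp IVQ _ IHj alg_eqs(5)])
      show "Inv Q V (algS Q C t m (Suc (Suc j))) (algP Q C t m (Suc (Suc j)))"
        using \<open>\<forall>i\<in>{1..t}. Inv Q V (algS Q C t m i) (algP Q C t m i) \<and> _\<close> ij by blast
      show "emeasure (algS Q C t (Suc m) (Suc (Suc j))) (space Q) < \<infinity>" using fin ij by blast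
      show "C (Suc (Suc j)) \<subseteq> PMs Q" "variation_closed Q (C (Suc (Suc j)))" "convex_PMs Q (C (Suc (Suc j)))"
        using Cp ij by blast+
      show "V \<in> C (Suc (Suc j))" using VC ij by blast
    qed
  qed
  show ?case
  proof
    fix i assume i: "i \<in> {1..t}"
    then obtain j where j: "i = Suc j" by (cases i) auto
    show "Inv Q V (algS Q C t (Suc m) i) (algP Q C t (Suc m) i) \<and>
        (0 < Suc m \<longrightarrow> is_Iproj (algS Q C t (Suc m) i) (C i) (algP Q C t (Suc m) i))"
      using step[of j] i j by simp
  qed
qed

theorem lemma3p1:
  fixes Q :: "'a measure" and C :: "nat \<Rightarrow> 'a measure set" and t :: nat
  assumes "prob_space Q"
    and "t \<ge> 1"
    and "\<forall>i\<in>{1..t}. C i \<subseteq> PMs Q \<and> variation_closed Q (C i) \<and> convex_PMs Q (C i)"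
    and "(SUP n. SUP i\<in>{1..t}. emeasure (algS Q C t n i) (space Q)) < \<infinity>"
    and "\<exists>V\<in>(\<Inter>i\<in>{1..t}. C i). Idiv V Q < \<infinity>"
  shows "\<forall>n\<ge>1. \<forall>i\<in>{1..t}.
           is_Iproj (algS Q C t n i) (C i) (algP Q C t n i)
         \<and> Idiv (algP Q C t n i) (algS Q C t n i) < \<infinity>
         \<and> density (algS Q C t n i) (RN_deriv (algS Q C t n i) (algP Q C t n i)) = algP Q C t n i"
proof -
  obtain V where V: "V \<in> (\<Inter>i\<in>{1..t}. C i)" "Idiv V Q < \<infinity>" using assms(5) by blast
  have VC: "\<forall>i\<in>{1..t}. V \<in> C i" using V(1) by blast
  have fin: "emeasure (algS Q C t n i) (space Q) < \<infinity>" if i: "i \<in> {1..t}" for n i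
  proof -
    have "emeasure (algS Q C t n i) (space Q) \<le> (SUP i\<in>{1..t}. emeasure (algS Q C t n i) (space Q))"
      by (rule SUP_upper[OF i])
    also have "\<dots> \<le> (SUP n. SUP i\<in>{1..t}. emeasure (algS Q C t n i) (space Q))"
      by (rule SUP_upper) simp
    finally show ?thesis using assms(4) by (rule le_less_trans)
  qed
  have M: "\<forall>i\<in>{1..t}. Inv Q V (algS Q C t n i) (algP Q C t n i) \<and>
           (0 < n \<longrightarrow> is_Iproj (algS Q C t n i) (C i) (algP Q C t n i))" for n
    by (rule main_ind[OF assms(1,2,3) fin VC V(2)])
  show ?thesis
  proof (intro allI impI ballI)
    fix n i :: nat assume n: "n \<ge> 1" and i: "i \<in> {1..t}"
    from M[of n] i n have Iv: "Inv Q V (algS Q C t n i) (algP Q C t n i)"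
      and isI: "is_Iproj (algS Q C t n i) (C i) (algP Q C t n i)" by auto
    have "Idiv (algP Q C t n i) (algS Q C t n i) < \<infinity>" using isI unfolding is_Iproj_def by blast
    moreover have "density (algS Q C t n i) (RN_deriv (algS Q C t n i) (algP Q C t n i)) = algP Q C t n i"
      using Iv unfolding Inv_def by metis
    ultimately show "is_Iproj (algS Q C t n i) (C i) (algP Q C t n i)
         \<and> Idiv (algP Q C t n i) (algS Q C t n i) < \<infinity>
         \<and> density (algS Q C t n i) (RN_deriv (algS Q C t n i) (algP Q C t n i)) = algP Q C t n i"
      using isI by simp
  qed
qed

end
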